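(* Let $A$ be a set. Let $(G,S)$ and $(H,S)$ be two compatible $d$-labeled boundaried graphs, let $\mathcal{B}$ be the set of blocks of $G[S]$ with at least two vertices, and let $g:\mathcal{B}\to A$ be a function such that (i) each $S$-block of $G$ or $H$ is chordal, (ii) $\mathbf{Aux}(G,S)\oplus\mathbf{Aux}(H,S)$ has no cycles, and (iii) for all $B_1,B_2\in\mathcal{B}$ that are contained in a common $S$-block of $G$ or in a common $S$-block of $H$, $g(B_1)=g(B_2)$. If $F$ is an $S$-block of $(G,S)\oplus(H,S)$ and $B_1,B_2\in\mathcal{B}$ satisfy $V(B_1),V(B_2)\subseteq V(F)$, then $g(B_1)=g(B_2)$.
   Context: A block of a graph is a maximal connected subgraph without a cut vertex; a graph is chordal if it has no induced cycle of length at least $4$. A block $d$-labeling of a graph whose blocks have at most $d$ vertices is a map $V(G)\to[d]$ injective on each block; a $d$-labeled boundaried graph is a pair $(G,S)$ with $S\subseteq V(G)$ and $G$ carrying such a labeling. $(G,S)$ and $(H,S)$ are compatible if $V(G-S)\cap V(H-S)=\emptyset$, $G[S]=H[S]$, and labels agree on $S$. The sum $(G,S)\oplus(H,S)$ is the graph obtained from the disjoint union of $G$ and $H$ by identifying corresponding vertices of $S$ and removing duplicate edges inside $S$. An $S$-block of a graph containing $S$ is a block of it containing an edge of $G[S]$. $\mathbf{Aux}(G,S)$ is the bipartite graph whose vertices are the connected components of $G$ and the connected components of $G[S]$, a component $C_1$ of $G$ adjacent to a component $C_2$ of $G[S]$ iff $C_2\subseteq C_1$; $\mathbf{Aux}(G,S)\oplus\mathbf{Aux}(H,S)$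 is the disjoint union of $\mathbf{Aux}(G,S)$ and $\mathbf{Aux}(H,S)$ with the vertices corresponding to the same component of $G[S]=H[S]$ identified. *)

theory Defs
  imports Main
begin

type_synonym 'v graph = "'v set \<times> 'v set set"

definition verts :: "'v graph \<Rightarrow> 'v set" where "verts G = fst G"
definition edges :: "'v graph \<Rightarrow> 'v set set" where "edges G = snd G"

definition wf_graph :: "'v graph \<Rightarrow> bool" where
  "wf_graph G \<longleftrightarrow> finite (verts G) \<and>
     (\<forall>e\<in>edges G. \<exists>u v. e = {u, v} \<and> u \<noteq> v \<and> u \<in> verts G \<and> v \<in> verts G)"

definition subgraph :: "'v graph \<Rightarrow> 'v graph \<Rightarrow> bool" where
  "subgraph H G \<longleftrightarrow> wf_graph H \<and> verts H \<subseteq> verts G \<and> edges H \<subseteq> edges G"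

definition induced :: "'v graph \<Rightarrow> 'v set \<Rightarrow> 'v graph" where
  "induced G X = (verts G \<inter> X, {e \<in> edges G. e \<subseteq> X})"

definition gunion :: "'v graph \<Rightarrow> 'v graph \<Rightarrow> 'v graph" where
  "gunion G H = (verts G \<union> verts H, edges G \<union> edges H)"

definition adj :: "'v graph \<Rightarrow> 'v \<Rightarrow> 'v \<Rightarrow> bool" where
  "adj G u v \<longleftrightarrow> {u, v} \<in> edges G"

definition connected_graph :: "'v graph \<Rightarrow> bool" where
  "connected_graph G \<longleftrightarrow> verts G \<noteq> {} \<and>
     (\<forall>u\<in>verts G. \<forall>v\<in>verts G. (adj G)\<^sup>*\<^sup>* u v)"

definition comps :: "'v graph \<Rightarrow> 'v set set" where
  "comps G = {{v \<in> verts G. (adj G)\<^sup>*\<^sup>* u v} | u. u \<in> verts G}"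

text \<open>A cut vertex: its removal increases the number of components, i.e. it
  separates two vertices lying in a common component.\<close>
definition cut_vertex :: "'v graph \<Rightarrow> 'v \<Rightarrow> bool" where
  "cut_vertex G v \<longleftrightarrow> v \<in> verts G \<and>
     (\<exists>u w. u \<in> verts G - {v} \<and> w \<in> verts G - {v} \<and> (adj G)\<^sup>*\<^sup>* u w \<and>
            \<not> (adj (induced G (verts G - {v})))\<^sup>*\<^sup>* u w)"

definition biconn :: "'v graph \<Rightarrow> bool" where
  "biconn B \<longleftrightarrow> connected_graph B \<and> (\<forall>v. \<not> cut_vertex B v)"

definition is_block :: "'v graph \<Rightarrow> 'v graph \<Rightarrow> bool" where
  "is_block G B \<longleftrightarrow> subgraph B G \<and> biconn B \<and>
     (\<forall>B'. subgraph B' G \<and> biconn B' \<and> subgraph B B' \<longrightarrow> B' = B)"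

definition cyc_adj :: "nat \<Rightarrow> nat \<Rightarrow> nat \<Rightarrow> bool" where
  "cyc_adj n i j \<longleftrightarrow> j = Suc i mod n \<or> i = Suc j mod n"

definition induced_cycle :: "'v graph \<Rightarrow> 'v list \<Rightarrow> bool" where
  "induced_cycle G vs \<longleftrightarrow> distinct vs \<and> length vs \<ge> 3 \<and> set vs \<subseteq> verts G \<and>
     (\<forall>i<length vs. \<forall>j<length vs. i \<noteq> j \<longrightarrow>
        ({vs ! i, vs ! j} \<in> edges G \<longleftrightarrow> cyc_adj (length vs) i j))"

definition chordal :: "'v graph \<Rightarrow> bool" where
  "chordal G \<longleftrightarrow> \<not> (\<exists>vs. induced_cycle G vs \<and> length vs \<ge> 4)"

definition has_cycle :: "'v graph \<Rightarrow> bool" where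
  "has_cycle G \<longleftrightarrow> (\<exists>vs. distinct vs \<and> length vs \<ge> 3 \<and> set vs \<subseteq> verts G \<and>
     (\<forall>i<length vs. {vs ! i, vs ! (Suc i mod length vs)} \<in> edges G))"

definition block_labeling :: "nat \<Rightarrow> 'v graph \<Rightarrow> ('v \<Rightarrow> nat) \<Rightarrow> bool" where
  "block_labeling d G lab \<longleftrightarrow>
     (\<forall>B. is_block G B \<longrightarrow> card (verts B) \<le> d \<and> inj_on lab (verts B)) \<and>
     (\<forall>v\<in>verts G. lab v \<in> {1..d})"

definition labeled_boundaried :: "nat \<Rightarrow> 'v graph \<Rightarrow> 'v set \<Rightarrow> ('v \<Rightarrow> nat) \<Rightarrow> bool" where
  "labeled_boundaried d G S lab \<longleftrightarrow> wf_graph G \<and> S \<subseteq> verts G \<and> block_labeling d G lab"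

definition compatible ::
  "'v graph \<Rightarrow> ('v \<Rightarrow> nat) \<Rightarrow> 'v graph \<Rightarrow> ('v \<Rightarrow> nat) \<Rightarrow> 'v set \<Rightarrow> bool" where
  "compatible G labG H labH S \<longleftrightarrow>
     (verts G - S) \<inter> (verts H - S) = {} \<and> induced G S = induced H S \<and>
     (\<forall>v\<in>S. labG v = labH v)"

text \<open>Since the vertex sets outside S are disjoint and S is shared literally,
  the boundaried sum is the union of the two graphs (duplicate edges inside S
  disappear automatically).\<close>
definition bsum :: "'v graph \<Rightarrow> 'v graph \<Rightarrow> 'v graph" where
  "bsum G H = gunion G H"

definition S_block :: "'v graph \<Rightarrow> 'v set \<Rightarrow> 'v graph \<Rightarrow> bool" where
  "S_block G S F \<longleftrightarrow> is_block G F \<and> (\<exists>e\<in>edges (induced G S). e \<in> edges F)"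

text \<open>Components of G (resp. H)
  are tagged GC (resp. HC), components of G[S] = H[S] are tagged SC, so that the
  union of the two auxiliary graphs is exactly their sum (identification of the
  G[S]-components).\<close>
datatype 'v auxv = GC "'v set" | HC "'v set" | SC "'v set"

definition aux :: "('v set \<Rightarrow> 'v auxv) \<Rightarrow> 'v graph \<Rightarrow> 'v set \<Rightarrow> 'v auxv graph" where
  "aux tag G S = (tag ` comps G \<union> SC ` comps (induced G S),
     {{tag C, SC D} | C D. C \<in> comps G \<and> D \<in> comps (induced G S) \<and> D \<subseteq> C})"

definition aux_sum :: "'v graph \<Rightarrow> 'v graph \<Rightarrow> 'v set \<Rightarrow> 'v auxv graph" where
  "aux_sum G H S = gunion (aux GC G S) (aux HC H S)"

definition nontriv_blocks :: "'v graph \<Rightarrow> 'v graph set" where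
  "nontriv_blocks G = {B. is_block G B \<and> card (verts B) \<ge> 2}"

end

theory Submission
  imports Defs
begin

lemma verts_induced[simp]: "verts (induced G X) = verts G \<inter> X"
  by (simp add: induced_def verts_def)
lemma edges_induced[simp]: "edges (induced G X) = {e \<in> edges G. e \<subseteq> X}"
  by (simp add: induced_def edges_def)
lemma verts_gunion[simp]: "verts (gunion G H) = verts G \<union> verts H"
  by (simp add: gunion_def verts_def)
lemma edges_gunion[simp]: "edges (gunion G H) = edges G \<union> edges H"
  by (simp add: gunion_def edges_def)
lemma verts_pair[simp]: "verts (V, E) = V" by (simp add: verts_def)
lemma edges_pair[simp]: "edges (V, E) = E" by (simp add: edges_def)
lemma graph_eq: "verts A = verts B \<Longrightarrow> edges A = edges B \<Longrightarrow> A = B"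
  by (simp add: verts_def edges_def prod_eq_iff)

lemma adj_sym: "adj G u v = adj G v u"
  by (simp add: adj_def insert_commute)

lemma adj_induced[simp]: "adj (induced G X) u v \<longleftrightarrow> adj G u v \<and> u \<in> X \<and> v \<in> X"
  by (auto simp: adj_def)

lemma wf_edgeE:
  assumes "wf_graph G" "e \<in> edges G"
  obtains u v where "e = {u, v}" "u \<noteq> v" "u \<in> verts G" "v \<in> verts G"
  using assms unfolding wf_graph_def by meson

lemma wf_edge_sub: "wf_graph G \<Longrightarrow> e \<in> edges G \<Longrightarrow> e \<subseteq> verts G"
  by (erule wf_edgeE) auto

lemma wf_adj: "wf_graph G \<Longrightarrow> adj G u v \<Longrightarrow> u \<in> verts G \<and> v \<in> verts G \<and> u \<noteq> v"
  unfolding adj_def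
  by (erule wf_edgeE) (auto simp: doubleton_eq_iff)

lemma rtranclp_adj_sym: "(adj G)\<^sup>*\<^sup>* u v \<Longrightarrow> (adj G)\<^sup>*\<^sup>* v u"
proof (induction rule: rtranclp_induct)
  case base then show ?case by simp
next
  case (step y z) then show ?case
  proof -
    have "adj G z y" using step(2) by (simp add: adj_sym)
    then show ?case using step(3) by (rule converse_rtranclp_into_rtranclp)
  qed
qed

lemma adj_mono: "edges G \<subseteq> edges H \<Longrightarrow> adj G u v \<Longrightarrow> adj H u v"
  by (auto simp: adj_def)

lemma rtranclp_adj_mono':
  assumes "(adj G)\<^sup>*\<^sup>* u v" "\<And>a b. adj G a b \<Longrightarrow> adj H a b" shows "(adj H)\<^sup>*\<^sup>* u v"
  using assms(1) by (induction rule: rtranclp_induct) (auto intro: rtranclp.rtrancl_into_rtrancl assms(2))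

lemma rtranclp_adj_mono: "edges G \<subseteq> edges H \<Longrightarrow> (adj G)\<^sup>*\<^sup>* u v \<Longrightarrow> (adj H)\<^sup>*\<^sup>* u v"
  by (erule rtranclp_adj_mono') (auto simp: adj_def)

lemma rtranclp_adj_verts:
  assumes "wf_graph G" "(adj G)\<^sup>*\<^sup>* u v" "u \<in> verts G" shows "v \<in> verts G"
  using assms(2,3) by (induction rule: rtranclp_induct) (auto dest: wf_adj[OF assms(1)])

lemma rtranclp_adj_induced_in:
  assumes "(adj (induced G X))\<^sup>*\<^sup>* u v" "u \<in> X" shows "v \<in> X"
  using assms by (induction rule: rtranclp_induct) auto

lemma subgraph_trans: "subgraph A B \<Longrightarrow> subgraph B C \<Longrightarrow> subgraph A C"
  unfolding subgraph_def by blast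

lemma subgraph_wf: "subgraph A B \<Longrightarrow> wf_graph A" unfolding subgraph_def by blast

lemma wf_intro:
  assumes "finite (verts G)" "\<And>e. e \<in> edges G \<Longrightarrow> \<exists>u v. e = {u, v} \<and> u \<noteq> v \<and> u \<in> verts G \<and> v \<in> verts G"
  shows "wf_graph G"
  using assms unfolding wf_graph_def by blast

lemma wf_induced: assumes "wf_graph G" shows "wf_graph (induced G X)"
proof (rule wf_intro)
  show "finite (verts (induced G X))" using assms unfolding wf_graph_def by simp
  fix e assume "e \<in> edges (induced G X)"
  then have "e \<in> edges G" "e \<subseteq> X" by auto
  then show "\<exists>u v. e = {u, v} \<and> u \<noteq> v \<and> u \<in> verts (induced G X) \<and> v \<in> verts (induced G X)"
    using assms by (elim wf_edgeE) auto
qed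

lemma wf_gunion: assumes "wf_graph G" "wf_graph H" shows "wf_graph (gunion G H)"
proof (rule wf_intro)
  show "finite (verts (gunion G H))" using assms unfolding wf_graph_def by simp
  fix e assume "e \<in> edges (gunion G H)"
  then have "e \<in> edges G \<or> e \<in> edges H" by auto
  then show "\<exists>u v. e = {u, v} \<and> u \<noteq> v \<and> u \<in> verts (gunion G H) \<and> v \<in> verts (gunion G H)"
  proof
    assume "e \<in> edges G"
    then obtain u v where "e = {u, v}" "u \<noteq> v" "u \<in> verts G" "v \<in> verts G"
      using wf_edgeE[OF assms(1)] by blast
    then show ?thesis by auto
  next
    assume "e \<in> edges H"
    then obtain u v where "e = {u, v}" "u \<noteq> v" "u \<in> verts H" "v \<in> verts H"
      using wf_edgeE[OF assms(2)] by blast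
    then show ?thesis by auto
  qed
qed

lemma subgraph_antisym: "subgraph A B \<Longrightarrow> subgraph B A \<Longrightarrow> A = B"
  unfolding subgraph_def by (auto intro: graph_eq)

lemma biconn_conn: "biconn X \<Longrightarrow> u \<in> verts X \<Longrightarrow> v \<in> verts X \<Longrightarrow> (adj X)\<^sup>*\<^sup>* u v"
  unfolding biconn_def connected_graph_def by blast

lemma biconn_avoid:
  assumes "wf_graph X" "biconn X" "u \<in> verts X" "v \<in> verts X" "u \<noteq> w" "v \<noteq> w"
  shows "(adj (induced X (verts X - {w})))\<^sup>*\<^sup>* u v"
proof (cases "w \<in> verts X")
  case True
  have "(adj X)\<^sup>*\<^sup>* u v" using assms(2,3,4) by (rule biconn_conn)
  moreover have "\<not> cut_vertex X w" using assms(2) unfolding biconn_def by blast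
  ultimately show ?thesis using True assms(3-6) unfolding cut_vertex_def
    by (metis Diff_iff singletonD)
next
  case False
  have "(adj X)\<^sup>*\<^sup>* u v" using assms(2,3,4) by (rule biconn_conn)
  then show ?thesis
  proof (rule rtranclp_adj_mono')
    fix a b assume "adj X a b"
    then have "a \<in> verts X" "b \<in> verts X" using wf_adj[OF assms(1)] by blast+
    then show "adj (induced X (verts X - {w})) a b" using \<open>adj X a b\<close> False by auto
  qed
qed

lemma biconn_intro:
  assumes "verts X \<noteq> {}"
    and "\<And>u v. u \<in> verts X \<Longrightarrow> v \<in> verts X \<Longrightarrow> (adj X)\<^sup>*\<^sup>* u v"
    and "\<And>w u v. w \<in> verts X \<Longrightarrow> u \<in> verts X \<Longrightarrow> v \<in> verts X \<Longrightarrow> u \<noteq> w \<Longrightarrow> v \<noteq> w \<Longrightarrow>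
          (adj (induced X (verts X - {w})))\<^sup>*\<^sup>* u v"
  shows "biconn X"
proof -
  have "connected_graph X" unfolding connected_graph_def using assms(1,2) by blast
  moreover have "\<not> cut_vertex X w" for w
  proof
    assume "cut_vertex X w"
    then obtain u v where "w \<in> verts X" "u \<in> verts X - {w}" "v \<in> verts X - {w}"
      "\<not> (adj (induced X (verts X - {w})))\<^sup>*\<^sup>* u v"
      unfolding cut_vertex_def by blast
    then show False using assms(3)[of w u v] by blast
  qed
  ultimately show ?thesis unfolding biconn_def by blast
qed

lemma biconn_union:
  assumes wX: "wf_graph X" and wY: "wf_graph Y" and bX: "biconn X" and bY: "biconn Y"
    and c: "c1 \<noteq> c2" "c1 \<in> verts X" "c1 \<in> verts Y" "c2 \<in> verts X" "c2 \<in> verts Y"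
  shows "biconn (gunion X Y)"
proof (rule biconn_intro)
  show "verts (gunion X Y) \<noteq> {}" using c by auto
  have toc: "(adj (gunion X Y))\<^sup>*\<^sup>* u c1" if "u \<in> verts (gunion X Y)" for u
  proof -
    have "u \<in> verts X \<or> u \<in> verts Y" using that by simp
    then show ?thesis
    proof
      assume "u \<in> verts X"
      then have "(adj X)\<^sup>*\<^sup>* u c1" using biconn_conn[OF bX _ c(2)] by blast
      then show ?thesis by (rule rtranclp_adj_mono[rotated]) auto
    next
      assume "u \<in> verts Y"
      then have "(adj Y)\<^sup>*\<^sup>* u c1" using biconn_conn[OF bY _ c(3)] by blast
      then show ?thesis by (rule rtranclp_adj_mono[rotated]) auto
    qed
  qed
  fix u v assume "u \<in> verts (gunion X Y)" "v \<in> verts (gunion X Y)"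
  then have "(adj (gunion X Y))\<^sup>*\<^sup>* u c1" "(adj (gunion X Y))\<^sup>*\<^sup>* c1 v"
    using toc[of u] rtranclp_adj_sym[OF toc[of v]] by auto
  then show "(adj (gunion X Y))\<^sup>*\<^sup>* u v" by (rule rtranclp_trans)
next
  fix w u v assume uv: "w \<in> verts (gunion X Y)" "u \<in> verts (gunion X Y)" "v \<in> verts (gunion X Y)"
    "u \<noteq> w" "v \<noteq> w"
  obtain c where cc: "c \<in> verts X" "c \<in> verts Y" "c \<noteq> w" using c by blast
  let ?U = "induced (gunion X Y) (verts (gunion X Y) - {w})"
  have monoX: "adj (induced X (verts X - {w})) a b \<Longrightarrow> adj ?U a b" for a b
    by (auto simp: adj_def)
  have monoY: "adj (induced Y (verts Y - {w})) a b \<Longrightarrow> adj ?U a b" for a b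
    by (auto simp: adj_def)
  have toc: "(adj ?U)\<^sup>*\<^sup>* a c" if "a \<in> verts (gunion X Y)" "a \<noteq> w" for a
  proof -
    have "a \<in> verts X \<or> a \<in> verts Y" using that by simp
    then show ?thesis
    proof
      assume "a \<in> verts X"
      then have "(adj (induced X (verts X - {w})))\<^sup>*\<^sup>* a c"
        using biconn_avoid[OF wX bX _ cc(1) that(2) cc(3)] by blast
      then show ?thesis using monoX by (rule rtranclp_adj_mono')
    next
      assume "a \<in> verts Y"
      then have "(adj (induced Y (verts Y - {w})))\<^sup>*\<^sup>* a c"
        using biconn_avoid[OF wY bY _ cc(2) that(2) cc(3)] by blast
      then show ?thesis using monoY by (rule rtranclp_adj_mono')
    qed
  qed
  have "(adj ?U)\<^sup>*\<^sup>* u c" "(adj ?U)\<^sup>*\<^sup>* c v"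
    using toc[OF uv(2,4)] rtranclp_adj_sym[OF toc[OF uv(3,5)]] by auto
  then show "(adj ?U)\<^sup>*\<^sup>* u v" by (rule rtranclp_trans)
qed


lemma wf_finite_edges: "wf_graph G \<Longrightarrow> finite (edges G)"
proof -
  assume w: "wf_graph G"
  have "edges G \<subseteq> Pow (verts G)" using wf_edge_sub[OF w] by blast
  moreover have "finite (verts G)" using w unfolding wf_graph_def by blast
  ultimately show ?thesis by (meson finite_Pow_iff finite_subset)
qed

lemma max_subgraph:
  assumes w: "wf_graph G" and P0: "P B0" and sub: "\<And>B. P B \<Longrightarrow> subgraph B G"
  obtains B where "P B" "\<And>B'. P B' \<Longrightarrow> subgraph B B' \<Longrightarrow> B' = B"
proof -
  define h where "h B = card (verts B) + card (edges B)" for B :: "'a graph"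
  have fV: "finite (verts G)" using w unfolding wf_graph_def by blast
  have fE: "finite (edges G)" using w by (rule wf_finite_edges)
  have bnd: "\<forall>B. P B \<longrightarrow> h B < card (verts G) + card (edges G) + 1"
  proof (intro allI impI)
    fix B assume "P B"
    then have "verts B \<subseteq> verts G" "edges B \<subseteq> edges G" using sub unfolding subgraph_def by blast+
    then have "card (verts B) \<le> card (verts G)" "card (edges B) \<le> card (edges G)"
      using fV fE card_mono by blast+
    then show "h B < card (verts G) + card (edges G) + 1" unfolding h_def by simp
  qed
  obtain B where B: "P B" "\<forall>y. P y \<longrightarrow> h y \<le> h B"
    using Lattices_Big.ex_has_greatest_nat[of P B0 h, OF P0 bnd] by blast
  show ?thesis
  proof (rule that[OF B(1)])
    fix B' assume B': "P B'" "subgraph B B'"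
    have sV: "verts B \<subseteq> verts B'" and sE: "edges B \<subseteq> edges B'" using B'(2) unfolding subgraph_def by blast+
    have "verts B' \<subseteq> verts G" "edges B' \<subseteq> edges G" using sub[OF B'(1)] unfolding subgraph_def by blast+
    then have fV': "finite (verts B')" and fE': "finite (edges B')" using fV fE finite_subset by blast+
    have c1: "card (verts B) \<le> card (verts B')" using sV fV' card_mono by blast
    have c2: "card (edges B) \<le> card (edges B')" using sE fE' card_mono by blast
    have "h B' \<le> h B" using B(2) B'(1) by blast
    then have "card (verts B) = card (verts B')" "card (edges B) = card (edges B')"
      using c1 c2 unfolding h_def by linarith+
    then have "verts B = verts B'" "edges B = edges B'"
      using card_subset_eq[OF fV' sV] card_subset_eq[OF fE' sE] by auto
    then show "B' = B" by (intro graph_eq) auto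
  qed
qed

lemma block_exists:
  assumes w: "wf_graph G" and X: "subgraph X G" "biconn X"
  obtains B where "is_block G B" "subgraph X B"
proof -
  let ?P = "\<lambda>B. subgraph B G \<and> biconn B \<and> subgraph X B"
  have wX: "wf_graph X" using X subgraph_wf by blast
  have P0: "?P X" using X wX unfolding subgraph_def by blast
  obtain B where B: "?P B" "\<And>B'. ?P B' \<Longrightarrow> subgraph B B' \<Longrightarrow> B' = B"
    using max_subgraph[of G ?P X, OF w P0] by blast
  have "is_block G B" unfolding is_block_def
  proof (intro conjI allI impI)
    show "subgraph B G" "biconn B" using B(1) by blast+
    fix B' assume "subgraph B' G \<and> biconn B' \<and> subgraph B B'"
    then show "B' = B" using B(1) B(2)[of B'] subgraph_trans by blast
  qed
  then show ?thesis using that B(1) by blast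
qed

lemma block_absorb:
  assumes w: "wf_graph G" and B: "is_block G B" and X: "subgraph X G" "biconn X"
    and c: "c1 \<noteq> c2" "c1 \<in> verts X" "c1 \<in> verts B" "c2 \<in> verts X" "c2 \<in> verts B"
  shows "subgraph X B"
proof -
  have sB: "subgraph B G" "biconn B" using B unfolding is_block_def by blast+
  have wX: "wf_graph X" and wB: "wf_graph B" using X(1) sB(1) subgraph_wf by blast+
  let ?U = "gunion X B"
  have bU: "biconn ?U" using biconn_union[OF wX wB X(2) sB(2) c] .
  have wU: "wf_graph ?U" using wf_gunion[OF wX wB] .
  have "subgraph ?U G" using X(1) sB(1) wU unfolding subgraph_def by auto
  moreover have "subgraph B ?U" using wB unfolding subgraph_def by auto
  ultimately have "?U = B" using B bU unfolding is_block_def by blast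
  then have "verts X \<subseteq> verts B" "edges X \<subseteq> edges B"
    by (metis Un_upper1 verts_gunion edges_gunion)+
  then show ?thesis using wX unfolding subgraph_def by blast
qed

lemma blocks_eq:
  assumes w: "wf_graph G" and B: "is_block G B" and B': "is_block G B'"
    and c: "c1 \<noteq> c2" "c1 \<in> verts B" "c1 \<in> verts B'" "c2 \<in> verts B" "c2 \<in> verts B'"
  shows "B = B'"
proof -
  have s: "subgraph B G" "biconn B" "subgraph B' G" "biconn B'"
    using B B' unfolding is_block_def by blast+
  have "subgraph B B'" using block_absorb[OF w B' s(1,2) c] .
  moreover have "subgraph B' B" using block_absorb[OF w B s(3,4) c(1,3,2,5,4)] .
  ultimately show ?thesis by (rule subgraph_antisym)
qed

definition K2 :: "'v \<Rightarrow> 'v \<Rightarrow> 'v graph" where "K2 u v = ({u, v}, {{u, v}})"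

lemma verts_K2[simp]: "verts (K2 u v) = {u, v}" by (simp add: K2_def)
lemma edges_K2[simp]: "edges (K2 u v) = {{u, v}}" by (simp add: K2_def)

lemma biconn_K2: assumes "u \<noteq> v" shows "biconn (K2 u v)"
proof (rule biconn_intro)
  show "verts (K2 u v) \<noteq> {}" by simp
  have e: "adj (K2 u v) u v" "adj (K2 u v) v u" by (auto simp: adj_def insert_commute)
  fix a b assume "a \<in> verts (K2 u v)" "b \<in> verts (K2 u v)"
  then show "(adj (K2 u v))\<^sup>*\<^sup>* a b" using e by auto
next
  fix w a b assume "w \<in> verts (K2 u v)" "a \<in> verts (K2 u v)" "b \<in> verts (K2 u v)" "a \<noteq> w" "b \<noteq> w"
  then have "a = b" by auto
  then show "(adj (induced (K2 u v) (verts (K2 u v) - {w})))\<^sup>*\<^sup>* a b" by simp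
qed

lemma subgraph_K2:
  assumes "wf_graph G" "{u, v} \<in> edges G" "u \<noteq> v"
  shows "subgraph (K2 u v) G"
proof -
  have "u \<in> verts G" "v \<in> verts G" using wf_edge_sub[OF assms(1,2)] by auto
  moreover have "wf_graph (K2 u v)" unfolding wf_graph_def using assms(3) by auto
  ultimately show ?thesis using assms(2) unfolding subgraph_def by auto
qed

lemma block_edge:
  assumes w: "wf_graph G" and B: "is_block G B" and e: "{u, v} \<in> edges G" "u \<noteq> v"
    and uv: "u \<in> verts B" "v \<in> verts B"
  shows "{u, v} \<in> edges B"
proof -
  have "subgraph (K2 u v) B"
    using block_absorb[OF w B subgraph_K2[OF w e] biconn_K2[OF e(2)] e(2)] uv by simp
  then show ?thesis unfolding subgraph_def by simp
qed

lemma edge_in_block: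
  assumes w: "wf_graph G" and e: "e \<in> edges G"
  obtains B where "is_block G B" "e \<in> edges B"
proof -
  obtain u v where uv: "e = {u, v}" "u \<noteq> v" using wf_edgeE[OF w e] by metis
  obtain B where "is_block G B" "subgraph (K2 u v) B"
    using block_exists[OF w subgraph_K2[OF w _ uv(2)] biconn_K2[OF uv(2)]] e uv(1) by blast
  then show ?thesis using that uv(1) unfolding subgraph_def by auto
qed

lemma block_sub: "is_block G B \<Longrightarrow> subgraph B G" unfolding is_block_def by blast
lemma block_biconn: "is_block G B \<Longrightarrow> biconn B" unfolding is_block_def by blast


fun pe :: "'v list \<Rightarrow> 'v set set" where
  "pe (a # b # xs) = insert {a, b} (pe (b # xs))"
| "pe _ = {}"

lemma pe_Cons: "pe (a # xs) = (if xs = [] then {} else insert {a, hd xs} (pe xs))"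
  by (cases xs) auto

lemma pe_append:
  "xs \<noteq> [] \<Longrightarrow> ys \<noteq> [] \<Longrightarrow> pe (xs @ ys) = pe xs \<union> pe ys \<union> {{last xs, hd ys}}"
proof (induction xs)
  case Nil then show ?case by simp
next
  case (Cons a xs)
  show ?case
  proof (cases "xs = []")
    case True then show ?thesis using Cons by (simp add: pe_Cons)
  next
    case False then show ?thesis using Cons by (auto simp: pe_Cons)
  qed
qed

lemma pe_append_sub1: "pe xs \<subseteq> pe (xs @ ys)"
  by (cases "xs = [] \<or> ys = []") (auto simp: pe_append)

lemma pe_append_sub2: "pe ys \<subseteq> pe (xs @ ys)"
  by (cases "xs = [] \<or> ys = []") (auto simp: pe_append)

lemma pe_rev: "pe (rev xs) = pe xs"
proof (induction xs)
  case Nil then show ?case by simp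
next
  case (Cons a xs)
  show ?case
  proof (cases "xs = []")
    case True then show ?thesis by simp
  next
    case False
    have "pe (rev xs @ [a]) = pe (rev xs) \<union> {{last (rev xs), a}}"
      using pe_append[of "rev xs" "[a]"] False by simp
    then show ?thesis using Cons False by (auto simp: pe_Cons last_rev insert_commute)
  qed
qed

lemma pe_sub_set: "e \<in> pe xs \<Longrightarrow> e \<subseteq> set xs"
  by (induction xs rule: pe.induct) auto

lemma pe_distinct_edge:
  "distinct xs \<Longrightarrow> e \<in> pe xs \<Longrightarrow> \<exists>u v. e = {u, v} \<and> u \<noteq> v \<and> u \<in> set xs \<and> v \<in> set xs"
  by (induction xs rule: pe.induct) auto

lemma set_sub_pe: "set xs \<subseteq> insert (hd xs) (\<Union> (pe xs))"
  by (induction xs rule: pe.induct) auto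

lemma pe_conn_hd:
  "pe xs \<subseteq> edges X \<Longrightarrow> x \<in> set xs \<Longrightarrow> (adj X)\<^sup>*\<^sup>* (hd xs) x"
proof (induction xs rule: pe.induct)
  case (1 a b ys)
  have ab: "adj X a b" using 1(2) by (auto simp: adj_def)
  show ?case
  proof (cases "x = a")
    case True then show ?thesis by simp
  next
    case False
    then have "(adj X)\<^sup>*\<^sup>* b x" using 1 by auto
    then show ?thesis using ab by (simp add: converse_rtranclp_into_rtranclp)
  qed
next
  case ("2_1") then show ?case by simp
next
  case ("2_2" v) then show ?case by simp
qed

lemma pe_conn:
  assumes "pe xs \<subseteq> edges X" "x \<in> set xs" "y \<in> set xs" shows "(adj X)\<^sup>*\<^sup>* x y"
proof -
  have "(adj X)\<^sup>*\<^sup>* x (hd xs)" using pe_conn_hd[OF assms(1,2)] by (rule rtranclp_adj_sym)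
  then show ?thesis using pe_conn_hd[OF assms(1,3)] by (rule rtranclp_trans)
qed

lemma walk_exists:
  assumes "(adj X)\<^sup>*\<^sup>* a b"
  shows "\<exists>xs. xs \<noteq> [] \<and> hd xs = a \<and> last xs = b \<and> pe xs \<subseteq> edges X"
  using assms
proof (induction rule: rtranclp_induct)
  case base
  then show ?case by (intro exI[of _ "[a]"]) auto
next
  case (step y z)
  then obtain xs where xs: "xs \<noteq> []" "hd xs = a" "last xs = y" "pe xs \<subseteq> edges X" by blast
  have "pe (xs @ [z]) = pe xs \<union> {{y, z}}" using pe_append[of xs "[z]"] xs by simp
  then show ?case using xs step(2) by (intro exI[of _ "xs @ [z]"]) (auto simp: adj_def)
qed

lemma walk_shorten:
  assumes "xs \<noteq> []" "pe xs \<subseteq> E"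
  shows "\<exists>ys. ys \<noteq> [] \<and> hd ys = hd xs \<and> last ys = last xs \<and> pe ys \<subseteq> E \<and> distinct ys \<and> set ys \<subseteq> set xs"
  using assms
proof (induction "length xs" arbitrary: xs rule: less_induct)
  case less
  show ?case
  proof (cases "distinct xs")
    case True then show ?thesis using less.prems by blast
  next
    case False
    then obtain p m n v where d: "xs = p @ [v] @ m @ [v] @ n" using not_distinct_decomp by blast
    let ?ys = "p @ [v] @ n"
    have l: "length ?ys < length xs" using d by simp
    have "pe ?ys \<subseteq> pe xs"
    proof -
      have "pe ?ys = pe ((p @ [v]) @ n)" by simp
      also have "\<dots> \<subseteq> pe (p @ [v]) \<union> pe ([v] @ n)"
      proof (cases "n = []")
        case True then show ?thesis by simp
      next
        case False
        have "pe ((p @ [v]) @ n) = pe (p @ [v]) \<union> pe n \<union> {{v, hd n}}"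
          using pe_append[of "p @ [v]" n] False by simp
        moreover have "pe ([v] @ n) = insert {v, hd n} (pe n)" using False by (simp add: pe_Cons)
        ultimately show ?thesis by auto
      qed
      also have "\<dots> \<subseteq> pe xs"
      proof -
        have "pe (p @ [v]) \<subseteq> pe ((p @ [v]) @ (m @ [v] @ n))" by (rule pe_append_sub1)
        moreover have "pe ([v] @ n) \<subseteq> pe ((p @ [v] @ m) @ ([v] @ n))" by (rule pe_append_sub2)
        ultimately show ?thesis using d by auto
      qed
      finally show ?thesis .
    qed
    then have "pe ?ys \<subseteq> E" using less.prems by blast
    moreover have "hd ?ys = hd xs" "last ?ys = last xs" using d by (cases p; cases n; simp)+
    moreover have "set ?ys \<subseteq> set xs" using d by auto
    moreover have "?ys \<noteq> []" by simp
    ultimately obtain zs where zs: "zs \<noteq> []" "hd zs = hd ?ys" "last zs = last ?ys" "pe zs \<subseteq> E" "distinct zs" "set zs \<subseteq> set ?ys"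
      using less.hyps[OF l] by meson
    show ?thesis
      apply (rule exI[of _ zs])
      using zs \<open>hd ?ys = hd xs\<close> \<open>last ?ys = last xs\<close> \<open>set ?ys \<subseteq> set xs\<close> by auto
  qed
qed

lemma path_exists:
  assumes "(adj X)\<^sup>*\<^sup>* a b"
  shows "\<exists>xs. xs \<noteq> [] \<and> hd xs = a \<and> last xs = b \<and> pe xs \<subseteq> edges X \<and> distinct xs"
proof -
  obtain xs where xs: "xs \<noteq> []" "hd xs = a" "last xs = b" "pe xs \<subseteq> edges X"
    using walk_exists[OF assms] by blast
  obtain ys where "ys \<noteq> [] \<and> hd ys = hd xs \<and> last ys = last xs \<and> pe ys \<subseteq> edges X \<and> distinct ys \<and> set ys \<subseteq> set xs"
    using walk_shorten[OF xs(1,4)] by blast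
  then show ?thesis using xs by blast
qed

definition ce :: "'v list \<Rightarrow> 'v set set" where "ce zs = pe (zs @ [hd zs])"

definition cyc :: "'v set set \<Rightarrow> 'v list \<Rightarrow> bool" where
  "cyc E zs \<longleftrightarrow> distinct zs \<and> 3 \<le> length zs \<and> ce zs \<subseteq> E"

lemma ce_nonempty: "zs \<noteq> [] \<Longrightarrow> ce zs = pe zs \<union> {{last zs, hd zs}}"
  unfolding ce_def using pe_append[of zs "[hd zs]"] by simp

lemma ce_rot: "ce (xs @ ys) = ce (ys @ xs)"
proof (cases "xs = [] \<or> ys = []")
  case True then show ?thesis by auto
next
  case False
  then have "xs \<noteq> []" "ys \<noteq> []" by auto
  then show ?thesis
    by (simp add: ce_nonempty pe_append insert_commute Un_ac)
qed

lemma cyc_rot: "cyc E (xs @ ys) \<longleftrightarrow> cyc E (ys @ xs)"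
  unfolding cyc_def using ce_rot[of xs ys] by auto

definition Cg :: "'v list \<Rightarrow> 'v graph" where "Cg zs = (set zs, ce zs)"

lemma verts_Cg[simp]: "verts (Cg zs) = set zs" by (simp add: Cg_def)
lemma edges_Cg[simp]: "edges (Cg zs) = ce zs" by (simp add: Cg_def)

lemma ce_edge:
  assumes "distinct zs" "2 \<le> length zs" "e \<in> ce zs"
  shows "\<exists>u v. e = {u, v} \<and> u \<noteq> v \<and> u \<in> set zs \<and> v \<in> set zs"
proof -
  have ne: "zs \<noteq> []" using assms(2) by auto
  have "e \<in> pe zs \<or> e = {last zs, hd zs}" using assms(3) ce_nonempty[OF ne] by auto
  then show ?thesis
  proof
    assume "e \<in> pe zs" then show ?thesis using pe_distinct_edge[OF assms(1)] by blast
  next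
    assume e: "e = {last zs, hd zs}"
    obtain a b rest where zs: "zs = a # b # rest" using assms(2)
      by (metis One_nat_def Suc_1 Suc_le_length_iff le_SucE list.size(3) nat.simps(3) numeral_2_eq_2)
    have "last zs \<noteq> hd zs" using assms(1) zs by (cases rest rule: rev_cases) auto
    moreover have "last zs \<in> set zs" "hd zs \<in> set zs" using ne by auto
    ultimately show ?thesis using e by blast
  qed
qed

lemma wf_Cg: assumes "distinct zs" "2 \<le> length zs" shows "wf_graph (Cg zs)"
  unfolding wf_graph_def using ce_edge[OF assms] by auto

lemma cyc_biconn:
  assumes c: "cyc E zs" shows "biconn (Cg zs)"
proof (rule biconn_intro)
  have d: "distinct zs" and l: "3 \<le> length zs" using c unfolding cyc_def by auto
  then have ne: "zs \<noteq> []" by auto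
  show "verts (Cg zs) \<noteq> {}" using ne by simp
  have pz: "pe zs \<subseteq> edges (Cg zs)" using ce_nonempty[OF ne] by auto
  show "(adj (Cg zs))\<^sup>*\<^sup>* u v" if "u \<in> verts (Cg zs)" "v \<in> verts (Cg zs)" for u v
    using pe_conn[OF pz] that by simp
next
  fix w u v assume a: "w \<in> verts (Cg zs)" "u \<in> verts (Cg zs)" "v \<in> verts (Cg zs)" "u \<noteq> w" "v \<noteq> w"
  have d: "distinct zs" and l: "3 \<le> length zs" using c unfolding cyc_def by auto
  obtain p q where pq: "zs = p @ w # q" using split_list[of w zs] a(1) by auto
  let ?ys = "q @ p"
  have ys_ne: "?ys \<noteq> []" using l pq by auto
  have ce2: "ce zs = ce (w # ?ys)" using ce_rot[of p "w # q"] pq by simp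
  also have "\<dots> = pe (w # ?ys @ [w])" by (simp add: ce_def)
  finally have "pe ?ys \<subseteq> ce zs"
    using pe_append_sub1[of ?ys "[w]"] by (auto simp: pe_Cons)
  moreover have sys: "set ?ys = set zs - {w}" using d pq by auto
  ultimately have "pe ?ys \<subseteq> edges (induced (Cg zs) (verts (Cg zs) - {w}))"
    using pe_sub_set[of _ ?ys] by auto
  moreover have "u \<in> set ?ys" "v \<in> set ?ys" using a sys by auto
  ultimately show "(adj (induced (Cg zs) (verts (Cg zs) - {w})))\<^sup>*\<^sup>* u v" by (rule pe_conn)
qed


lemma pe_split: "pe (xs @ v # ys) = pe (xs @ [v]) \<union> pe (v # ys)"
proof (induction xs)
  case Nil then show ?case by simp
next
  case (Cons a xs)
  then show ?case by (cases xs) auto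
qed

lemma pe_nth:
  "pe xs \<subseteq> E \<Longrightarrow> Suc i < length xs \<Longrightarrow> {xs ! i, xs ! Suc i} \<in> E"
proof (induction xs arbitrary: i rule: pe.induct)
  case (1 a b ys)
  show ?case
  proof (cases i)
    case 0 then show ?thesis using 1 by simp
  next
    case (Suc j)
    then show ?thesis using 1 by auto
  qed
qed auto

lemma has_cycle_from:
  assumes Ev: "\<And>e. e \<in> edges T \<Longrightarrow> e \<subseteq> verts T"
    and pa: "{p, a} \<in> edges T" and pb: "{p, b} \<in> edges T"
    and ab: "a \<noteq> b" "a \<noteq> p" "b \<noteq> p"
    and conn: "(adj (induced T (verts T - {p})))\<^sup>*\<^sup>* a b"
  shows "has_cycle T"
proof -
  obtain ys where ys: "ys \<noteq> []" "hd ys = a" "last ys = b" "distinct ys"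
    "pe ys \<subseteq> edges (induced T (verts T - {p}))"
    using path_exists[OF conn] by blast
  have sys: "set ys \<subseteq> verts T - {p}"
  proof -
    have "a \<in> verts T" using Ev[OF pa] by simp
    then have "insert (hd ys) (\<Union> (pe ys)) \<subseteq> verts T - {p}" using ys(2,5) ab by auto
    then show ?thesis using set_sub_pe[of ys] by blast
  qed
  have l2: "2 \<le> length ys"
  proof (rule ccontr)
    assume "\<not> 2 \<le> length ys"
    then have "length ys < 2" by simp
    moreover have "length ys \<noteq> 0" using ys(1) by simp
    ultimately have "length ys = Suc 0" by linarith
    then obtain c where "ys = [c]" by (auto simp: length_Suc_conv)
    then show False using ys(2,3) ab(1) by simp
  qed
  let ?vs = "p # ys"
  have dv: "distinct ?vs" using ys(4) sys by auto
  have lv: "3 \<le> length ?vs" using l2 by simp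
  have sv: "set ?vs \<subseteq> verts T" using sys Ev[OF pa] by auto
  have ev: "{?vs ! i, ?vs ! (Suc i mod length ?vs)} \<in> edges T" if i: "i < length ?vs" for i
  proof -
    consider "i = 0" | "0 < i" "Suc i < length ?vs" | "Suc i = length ?vs" using i by linarith
    then show ?thesis
    proof cases
      case 1
      have "?vs ! Suc 0 = a" using ys(1,2) by (cases ys) auto
      moreover have "Suc 0 mod length ?vs = Suc 0" using lv ys(1) by simp
      ultimately show ?thesis using 1 pa by simp
    next
      case 2
      then obtain j where j: "i = Suc j" by (cases i) auto
      have "Suc j < length ys" using 2 j by simp
      then have "{ys ! j, ys ! Suc j} \<in> edges (induced T (verts T - {p}))" using pe_nth[OF ys(5)] by blast
      then show ?thesis using j 2 by simp
    next
      case 3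
      then have "Suc i mod length ?vs = 0" by simp
      moreover have "?vs ! i = b"
      proof -
        have "i = length ys" using 3 by simp
        then have "?vs ! i = ys ! (length ys - 1)" using ys(1) by (cases i) auto
        then show ?thesis using ys(1,3) by (simp add: last_conv_nth)
      qed
      ultimately show ?thesis using pb by (simp add: insert_commute)
    qed
  qed
  show ?thesis unfolding has_cycle_def using dv lv sv ev by blast
qed


lemma comp_eq:
  assumes "adj X a b"
  shows "{u \<in> V. (adj X)\<^sup>*\<^sup>* a u} = {u \<in> V. (adj X)\<^sup>*\<^sup>* b u}"
proof -
  have ab: "(adj X)\<^sup>*\<^sup>* a b" using assms by simp
  have ba: "(adj X)\<^sup>*\<^sup>* b a" using assms adj_sym by (metis r_into_rtranclp)
  show ?thesis using rtranclp_trans[OF ab] rtranclp_trans[OF ba] by blast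
qed

locale setting =
  fixes G H :: "'v graph" and S :: "'v set"
  assumes wG: "wf_graph G" and wH: "wf_graph H" and SG: "S \<subseteq> verts G" and SH: "S \<subseteq> verts H"
    and disj: "(verts G - S) \<inter> (verts H - S) = {}" and ind: "induced G S = induced H S"
    and acyc: "\<not> has_cycle (aux_sum G H S)"
begin

abbreviation "W \<equiv> gunion G H"
abbreviation "T \<equiv> aux_sum G H S"

lemma wW: "wf_graph W" using wf_gunion[OF wG wH] .

lemma VGH: "v \<in> verts G \<Longrightarrow> v \<in> verts H \<Longrightarrow> v \<in> S"
  using disj by blast

lemma ind_edges: "{e \<in> edges G. e \<subseteq> S} = {e \<in> edges H. e \<subseteq> S}"
  using arg_cong[OF ind, of edges] by simp

lemma Sedge_GH: "e \<in> edges G \<Longrightarrow> e \<subseteq> S \<Longrightarrow> e \<in> edges H"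
  using ind_edges by blast
lemma Sedge_HG: "e \<in> edges H \<Longrightarrow> e \<subseteq> S \<Longrightarrow> e \<in> edges G"
  using ind_edges by blast

lemma edgeW_G: assumes "e \<in> edges W" "e \<subseteq> verts G" shows "e \<in> edges G"
proof -
  have "e \<in> edges G \<or> e \<in> edges H" using assms(1) by simp
  then show ?thesis
  proof
    assume h: "e \<in> edges H"
    then have "e \<subseteq> verts H" using wf_edge_sub[OF wH] by blast
    then have "e \<subseteq> S" using assms(2) VGH by blast
    then show ?thesis using Sedge_HG[OF h] by blast
  qed
qed

lemma edgeW_H: assumes "e \<in> edges W" "e \<subseteq> verts H" shows "e \<in> edges H"
proof -
  have "e \<in> edges G \<or> e \<in> edges H" using assms(1) by simp
  then show ?thesis
  proof
    assume h: "e \<in> edges G"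
    then have "e \<subseteq> verts G" using wf_edge_sub[OF wG] by blast
    then have "e \<subseteq> S" using assms(2) VGH by blast
    then show ?thesis using Sedge_GH[OF h] by blast
  qed
qed

definition piece :: "'v graph \<Rightarrow> bool" where "piece P \<longleftrightarrow> is_block G P \<or> is_block H P"
definition R :: "'v set \<Rightarrow> 'v set \<Rightarrow> bool" where
  "R e e' \<longleftrightarrow> (\<exists>P. piece P \<and> e \<in> edges P \<and> e' \<in> edges P)"
definition Omega :: "'v list \<Rightarrow> bool" where
  "Omega zs \<longleftrightarrow> (\<forall>e\<in>ce zs. \<forall>e'\<in>ce zs. R\<^sup>*\<^sup>* e e')"

lemma cyc_verts: assumes "cyc (edges W) zs" shows "set zs \<subseteq> verts W"
proof -
  have ne: "zs \<noteq> []" and ce: "ce zs \<subseteq> edges W" using assms unfolding cyc_def by auto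
  have "set zs \<subseteq> insert (hd zs) (\<Union> (pe zs))" by (rule set_sub_pe)
  moreover have "pe zs \<subseteq> edges W" "{last zs, hd zs} \<in> edges W" using ce ce_nonempty[OF ne] by auto
  ultimately show ?thesis using wf_edge_sub[OF wW] by blast
qed

lemma pure_G: assumes c: "cyc (edges W) zs" and sG: "set zs \<subseteq> verts G" shows "Omega zs"
proof -
  have d: "distinct zs" "2 \<le> length zs" and ce: "ce zs \<subseteq> edges W" using c unfolding cyc_def by auto
  have ceG: "ce zs \<subseteq> edges G"
  proof
    fix e assume e: "e \<in> ce zs"
    then have "e \<subseteq> set (zs @ [hd zs])" unfolding ce_def by (rule pe_sub_set)
    moreover have "set (zs @ [hd zs]) = set zs" using d by (cases zs) auto
    ultimately have "e \<subseteq> verts G" using sG by blast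
    then show "e \<in> edges G" using edgeW_G e ce by blast
  qed
  have "subgraph (Cg zs) G" unfolding subgraph_def using wf_Cg[OF d] sG ceG by simp
  then obtain X where X: "is_block G X" "subgraph (Cg zs) X"
    using block_exists[OF wG _ cyc_biconn[OF c]] by blast
  then have "ce zs \<subseteq> edges X" unfolding subgraph_def by simp
  then have "R e e'" if "e \<in> ce zs" "e' \<in> ce zs" for e e'
    using that X(1) unfolding R_def piece_def by blast
  then show ?thesis unfolding Omega_def by blast
qed

lemma pure_H: assumes c: "cyc (edges W) zs" and sH: "set zs \<subseteq> verts H" shows "Omega zs"
proof -
  have d: "distinct zs" "2 \<le> length zs" and ce: "ce zs \<subseteq> edges W" using c unfolding cyc_def by auto
  have ceH: "ce zs \<subseteq> edges H"
  proof
    fix e assume e: "e \<in> ce zs"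
    then have "e \<subseteq> set (zs @ [hd zs])" unfolding ce_def by (rule pe_sub_set)
    moreover have "set (zs @ [hd zs]) = set zs" using d by (cases zs) auto
    ultimately have "e \<subseteq> verts H" using sH by blast
    then show "e \<in> edges H" using edgeW_H e ce by blast
  qed
  have "subgraph (Cg zs) H" unfolding subgraph_def using wf_Cg[OF d] sH ceH by simp
  then obtain X where X: "is_block H X" "subgraph (Cg zs) X"
    using block_exists[OF wH _ cyc_biconn[OF c]] by blast
  then have "ce zs \<subseteq> edges X" unfolding subgraph_def by simp
  then have "R e e'" if "e \<in> ce zs" "e' \<in> ce zs" for e e'
    using that X(1) unfolding R_def piece_def by blast
  then show ?thesis unfolding Omega_def by blast
qed

end


context setting begin

definition gc :: "'v \<Rightarrow> 'v set" where "gc v = {u \<in> verts G. (adj G)\<^sup>*\<^sup>* v u}"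
definition hc :: "'v \<Rightarrow> 'v set" where "hc v = {u \<in> verts H. (adj H)\<^sup>*\<^sup>* v u}"
definition sc :: "'v \<Rightarrow> 'v set" where
  "sc v = {u \<in> verts (induced G S). (adj (induced G S))\<^sup>*\<^sup>* v u}"
definition nd :: "'v \<Rightarrow> 'v auxv" where
  "nd v = (if v \<in> S then SC (sc v) else if v \<in> verts G then GC (gc v) else HC (hc v))"

lemma verts_T: "verts T = GC ` comps G \<union> SC ` comps (induced G S) \<union> (HC ` comps H \<union> SC ` comps (induced H S))"
  unfolding aux_sum_def aux_def by simp

lemma edges_T: "edges T = {{GC C, SC D} | C D. C \<in> comps G \<and> D \<in> comps (induced G S) \<and> D \<subseteq> C}
   \<union> {{HC C, SC D} | C D. C \<in> comps H \<and> D \<in> comps (induced H S) \<and> D \<subseteq> C}"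
  unfolding aux_sum_def aux_def by simp

lemma T_edge_sub: "e \<in> edges T \<Longrightarrow> e \<subseteq> verts T"
  unfolding edges_T verts_T by auto

lemma T_edgeE:
  assumes "e \<in> edges T"
  obtains C D where "e = {GC C, SC D}" | C D where "e = {HC C, SC D}"
  using assms unfolding edges_T by blast

lemma gc_comps: "v \<in> verts G \<Longrightarrow> gc v \<in> comps G"
  unfolding gc_def comps_def by blast
lemma hc_comps: "v \<in> verts H \<Longrightarrow> hc v \<in> comps H"
  unfolding hc_def comps_def by blast
lemma sc_comps: "v \<in> S \<Longrightarrow> sc v \<in> comps (induced G S)"
  unfolding sc_def comps_def using SG by auto
lemma sc_comps': "v \<in> S \<Longrightarrow> sc v \<in> comps (induced H S)"
  using sc_comps ind by simp

lemma sc_sub_gc: "sc v \<subseteq> gc v"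
proof
  fix u assume "u \<in> sc v"
  then have "u \<in> verts G" "(adj (induced G S))\<^sup>*\<^sup>* v u" unfolding sc_def by auto
  moreover have "(adj G)\<^sup>*\<^sup>* v u" using calculation(2) by (rule rtranclp_adj_mono[rotated]) auto
  ultimately show "u \<in> gc v" unfolding gc_def by blast
qed

lemma sc_sub_hc: "sc v \<subseteq> hc v"
proof
  fix u assume "u \<in> sc v"
  then have u: "u \<in> verts (induced H S)" "(adj (induced H S))\<^sup>*\<^sup>* v u" unfolding sc_def using ind by auto
  then have "u \<in> verts H" by simp
  moreover have "(adj H)\<^sup>*\<^sup>* v u" using u(2) by (rule rtranclp_adj_mono[rotated]) auto
  ultimately show "u \<in> hc v" unfolding hc_def by blast
qed

lemma edge_GS: assumes "v \<in> S" shows "{GC (gc v), SC (sc v)} \<in> edges T"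
proof -
  have c: "gc v \<in> comps G" using assms SG gc_comps by blast
  have d: "sc v \<in> comps (induced G S)" using sc_comps[OF assms] .
  have "{GC (gc v), SC (sc v)} \<in> {{GC C, SC D} | C D. C \<in> comps G \<and> D \<in> comps (induced G S) \<and> D \<subseteq> C}"
    unfolding mem_Collect_eq by (intro exI[of _ "gc v"] exI[of _ "sc v"] conjI refl c d sc_sub_gc)
  then show ?thesis unfolding edges_T by (rule UnI1)
qed
lemma edge_HS: assumes "v \<in> S" shows "{HC (hc v), SC (sc v)} \<in> edges T"
proof -
  have c: "hc v \<in> comps H" using assms SH hc_comps by blast
  have d: "sc v \<in> comps (induced H S)" using sc_comps'[OF assms] .
  have "{HC (hc v), SC (sc v)} \<in> {{HC C, SC D} | C D. C \<in> comps H \<and> D \<in> comps (induced H S) \<and> D \<subseteq> C}"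
    unfolding mem_Collect_eq by (intro exI[of _ "hc v"] exI[of _ "sc v"] conjI refl c d sc_sub_hc)
  then show ?thesis unfolding edges_T by (rule UnI2)
qed

lemma nd_verts: assumes "v \<in> verts W" shows "nd v \<in> verts T"
proof (cases "v \<in> S")
  case True then show ?thesis unfolding nd_def verts_T using sc_comps by auto
next
  case False
  show ?thesis
  proof (cases "v \<in> verts G")
    case True then show ?thesis unfolding nd_def verts_T using gc_comps False by auto
  next
    case F2: False
    then have "v \<in> verts H" using assms by simp
    then show ?thesis unfolding nd_def verts_T using hc_comps False F2 by auto
  qed
qed

lemma nd_SC: "nd v = SC D \<Longrightarrow> v \<in> S \<and> D = sc v"
  unfolding nd_def by (auto split: if_splits)

lemma nd_lazy:
  assumes e: "{a, b} \<in> edges W"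
  shows "nd a = nd b \<or> {nd a, nd b} \<in> edges T"
proof -
  have ab: "a \<noteq> b" using wW e by (auto elim!: wf_edgeE simp: doubleton_eq_iff)
  have GH: "{a, b} \<in> edges G \<or> {a, b} \<in> edges H" using e by simp
  have adjG: "{a, b} \<in> edges G \<Longrightarrow> adj G a b" by (simp add: adj_def)
  have adjH: "{a, b} \<in> edges H \<Longrightarrow> adj H a b" by (simp add: adj_def)
  have vG: "{a, b} \<in> edges G \<Longrightarrow> a \<in> verts G \<and> b \<in> verts G" using wf_edge_sub[OF wG] by blast
  have vH: "{a, b} \<in> edges H \<Longrightarrow> a \<in> verts H \<and> b \<in> verts H" using wf_edge_sub[OF wH] by blast
  consider "a \<in> S" "b \<in> S" | "a \<in> S" "b \<notin> S" | "a \<notin> S" "b \<in> S" | "a \<notin> S" "b \<notin> S" by blast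
  then show ?thesis
  proof cases
    case 1
    have "{a, b} \<in> edges G" using GH Sedge_HG 1 by blast
    then have "adj (induced G S) a b" using 1 by (simp add: adj_def)
    then have "sc a = sc b" unfolding sc_def by (rule comp_eq)
    then show ?thesis using 1 unfolding nd_def by simp
  next
    case 2
    show ?thesis
    proof (cases "{a, b} \<in> edges G")
      case True
      then have "b \<in> verts G" using vG by blast
      then have "nd b = GC (gc b)" using 2 unfolding nd_def by simp
      moreover have "gc a = gc b" unfolding gc_def using adjG[OF True] by (rule comp_eq)
      ultimately show ?thesis using 2 edge_GS[of a] unfolding nd_def by (simp add: insert_commute)
    next
      case False
      then have h: "{a, b} \<in> edges H" using GH by blast
      then have "b \<in> verts H" using vH by blast
      then have "b \<notin> verts G" using 2 VGH by blast
      then have "nd b = HC (hc b)" using 2 unfolding nd_def by simp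
      moreover have "hc a = hc b" unfolding hc_def using adjH[OF h] by (rule comp_eq)
      ultimately show ?thesis using 2 edge_HS[of a] unfolding nd_def by (simp add: insert_commute)
    qed
  next
    case 3
    show ?thesis
    proof (cases "{a, b} \<in> edges G")
      case True
      then have "a \<in> verts G" using vG by blast
      then have "nd a = GC (gc a)" using 3 unfolding nd_def by simp
      moreover have "gc a = gc b" unfolding gc_def using adjG[OF True] by (rule comp_eq)
      ultimately show ?thesis using 3 edge_GS[of b] unfolding nd_def by simp
    next
      case False
      then have h: "{a, b} \<in> edges H" using GH by blast
      then have "a \<in> verts H" using vH by blast
      then have "a \<notin> verts G" using 3 VGH by blast
      then have "nd a = HC (hc a)" using 3 unfolding nd_def by simp
      moreover have "hc a = hc b" unfolding hc_def using adjH[OF h] by (rule comp_eq)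
      ultimately show ?thesis using 3 edge_HS[of b] unfolding nd_def by simp
    qed
  next
    case 4
    show ?thesis
    proof (cases "{a, b} \<in> edges G")
      case True
      then have "a \<in> verts G" "b \<in> verts G" using vG by blast+
      moreover have "gc a = gc b" unfolding gc_def using adjG[OF True] by (rule comp_eq)
      ultimately show ?thesis using 4 unfolding nd_def by simp
    next
      case False
      then have h: "{a, b} \<in> edges H" using GH by blast
      then have "a \<in> verts H" "b \<in> verts H" using vH by blast+
      then have "a \<notin> verts G" "b \<notin> verts G" using 4 VGH by blast+
      moreover have "hc a = hc b" unfolding hc_def using adjH[OF h] by (rule comp_eq)
      ultimately show ?thesis using 4 unfolding nd_def by simp
    qed
  qed
qed

lemma lazy_conn:
  "pe L \<subseteq> edges W \<Longrightarrow> (\<forall>x\<in>set L. nd x \<in> K) \<Longrightarrow> K \<subseteq> verts T \<Longrightarrow> x \<in> set L \<Longrightarrow>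
   (adj (induced T K))\<^sup>*\<^sup>* (nd (hd L)) (nd x)"
proof (induction L rule: pe.induct)
  case (1 a b ys)
  have st: "(adj (induced T K))\<^sup>*\<^sup>* (nd a) (nd b)"
  proof -
    have "{a, b} \<in> edges W" using 1(2) by simp
    then have "nd a = nd b \<or> {nd a, nd b} \<in> edges T" by (rule nd_lazy)
    moreover have "nd a \<in> K" "nd b \<in> K" using 1(3) by auto
    ultimately show ?thesis by (auto simp: adj_def)
  qed
  show ?case
  proof (cases "x = a")
    case True then show ?thesis by simp
  next
    case False
    have "(adj (induced T K))\<^sup>*\<^sup>* (nd (hd (b # ys))) (nd x)"
    proof (rule 1(1))
      show "pe (b # ys) \<subseteq> edges W" using 1(2) by auto
      show "\<forall>x\<in>set (b # ys). nd x \<in> K" using 1(3) by auto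
      show "K \<subseteq> verts T" using 1(4) .
      show "x \<in> set (b # ys)" using 1(5) False by auto
    qed
    then show ?thesis using st by (simp del: adj_induced add: rtranclp_trans)
  qed
qed auto

end


lemma pe_infix: "pe ys \<subseteq> pe (xs @ ys @ zs)"
proof -
  have "pe ys \<subseteq> pe (ys @ zs)" by (rule pe_append_sub1)
  also have "\<dots> \<subseteq> pe (xs @ (ys @ zs))" by (rule pe_append_sub2)
  finally show ?thesis .
qed

context setting begin

lemma separate:
  assumes conn: "(adj T)\<^sup>*\<^sup>* (GC C) (HC C')"
  obtains D where "SC D \<in> verts T" "\<not> (adj (induced T (verts T - {SC D})))\<^sup>*\<^sup>* (GC C) (HC C')"
proof -
  obtain xs where xs: "xs \<noteq> []" "hd xs = GC C" "last xs = HC C'" "pe xs \<subseteq> edges T" "distinct xs"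
    using path_exists[OF conn] by blast
  obtain xs' where xs': "xs = GC C # xs'" using xs(1,2) by (cases xs) auto
  have "xs' \<noteq> []" using xs' xs(3) by auto
  then obtain t1 xs'' where t1: "xs' = t1 # xs''" by (cases xs') auto
  have e1: "{GC C, t1} \<in> edges T" using xs(4) xs' t1 by simp
  obtain D where D: "t1 = SC D"
  proof -
    from e1 show ?thesis
    proof (rule T_edgeE)
      fix c d assume "{GC C, t1} = {GC c, SC d}"
      then have "t1 = SC d" by (auto simp: doubleton_eq_iff)
      then show ?thesis by (rule that)
    next
      fix c d assume "{GC C, t1} = {HC c, SC d}"
      then show ?thesis by (auto simp: doubleton_eq_iff)
    qed
  qed
  have "xs'' \<noteq> []" using xs(3) xs' t1 D by auto
  then obtain t2 xs3 where t2: "xs'' = t2 # xs3" by (cases xs'') auto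
  have e2: "{t1, t2} \<in> edges T" using xs(4) xs' t1 t2 by simp
  have dist: "GC C \<notin> set xs'" "t1 \<notin> set xs''" using xs(5) xs' t1 by auto
  have t2ne: "t2 \<noteq> GC C" "t2 \<noteq> t1" using dist t1 t2 by auto
  have vT: "SC D \<in> verts T" using T_edge_sub[OF e1] D by auto
  show ?thesis
  proof (rule that[OF vT], rule notI)
    let ?K = "verts T - {SC D}"
    assume c1: "(adj (induced T ?K))\<^sup>*\<^sup>* (GC C) (HC C')"
    have pe2: "pe xs'' \<subseteq> edges T" using xs(4) xs' t1 t2 by auto
    have "pe xs'' \<subseteq> edges (induced T ?K)"
    proof
      fix e assume e: "e \<in> pe xs''"
      then have "e \<subseteq> set xs''" by (rule pe_sub_set)
      moreover have "e \<in> edges T" using e pe2 by blast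
      ultimately show "e \<in> edges (induced T ?K)" using T_edge_sub dist(2) D by auto
    qed
    moreover have "last xs'' = HC C'" using xs(3) xs' t1 \<open>xs'' \<noteq> []\<close> by simp
    then have "HC C' \<in> set xs''" using \<open>xs'' \<noteq> []\<close> last_in_set by metis
    ultimately have "(adj (induced T ?K))\<^sup>*\<^sup>* (hd xs'') (HC C')"
      by (rule pe_conn_hd)
    then have "(adj (induced T ?K))\<^sup>*\<^sup>* t2 (HC C')" using t2 by simp
    then have "(adj (induced T ?K))\<^sup>*\<^sup>* (GC C) t2"
      using c1 by (meson rtranclp_adj_sym rtranclp_trans)
    then have "has_cycle T"
      using has_cycle_from[OF T_edge_sub, of t1 "GC C" t2] e1 e2 t2ne D
      by (simp add: insert_commute)
    then show False using acyc by blast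
  qed
qed

lemma avoid_contra:
  assumes pL: "pe L \<subseteq> edges W" and sL: "set L \<subseteq> verts W" and av: "\<forall>x\<in>set L. nd x \<noteq> P"
    and a: "a \<in> set L" "b \<in> set L"
    and sep: "\<not> (adj (induced T (verts T - {P})))\<^sup>*\<^sup>* (nd a) (nd b)"
  shows False
proof -
  let ?K = "verts T - {P}"
  have K: "\<forall>x\<in>set L. nd x \<in> ?K" using av sL nd_verts by blast
  have "(adj (induced T ?K))\<^sup>*\<^sup>* (nd (hd L)) (nd a)" "(adj (induced T ?K))\<^sup>*\<^sup>* (nd (hd L)) (nd b)"
    using lazy_conn[OF pL K] a by auto
  then show False using sep by (meson rtranclp_adj_sym rtranclp_trans)
qed

end


context setting begin

lemma cyc_pe: "cyc E zs \<Longrightarrow> pe zs \<subseteq> E"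
  unfolding cyc_def ce_def using pe_append_sub1 by blast

lemma seg:
  assumes c: "cyc (edges W) zs" and w: "w \<in> set zs" "w \<in> verts G" "w \<notin> S"
    and w2: "w2 \<in> set zs" "w2 \<notin> verts G"
  shows "\<exists>x A y B. ce (x # A @ y # B) = ce zs \<and> set (x # A @ y # B) = set zs \<and>
     cyc (edges W) (x # A @ y # B) \<and> x \<in> S \<and> y \<in> S \<and> (adj (induced G S))\<^sup>*\<^sup>* x y \<and>
     (\<exists>a\<in>set A. a \<notin> S) \<and> (\<exists>b\<in>set B. b \<notin> S)"
proof -
  have sZ: "set zs \<subseteq> verts W" using cyc_verts[OF c] .
  have w2H: "w2 \<in> verts H" "w2 \<notin> S" using w2 sZ SG by auto
  have nw: "nd w = GC (gc w)" using w unfolding nd_def by simp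
  have nw2: "nd w2 = HC (hc w2)" using w2 w2H unfolding nd_def by simp
  have connT: "(adj T)\<^sup>*\<^sup>* (GC (gc w)) (HC (hc w2))"
  proof -
    have K: "\<forall>x\<in>set zs. nd x \<in> verts T" using sZ nd_verts by blast
    have pz: "pe zs \<subseteq> edges W" using cyc_pe[OF c] .
    have "(adj (induced T (verts T)))\<^sup>*\<^sup>* (nd (hd zs)) (nd w)"
      "(adj (induced T (verts T)))\<^sup>*\<^sup>* (nd (hd zs)) (nd w2)"
      using lazy_conn[OF pz K] w(1) w2(1) by auto
    then have "(adj (induced T (verts T)))\<^sup>*\<^sup>* (nd w) (nd w2)"
      by (meson rtranclp_adj_sym rtranclp_trans)
    then have "(adj T)\<^sup>*\<^sup>* (nd w) (nd w2)" by (rule rtranclp_adj_mono[rotated]) auto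
    then show ?thesis using nw nw2 by simp
  qed
  obtain D where D: "SC D \<in> verts T"
    and sep0: "\<not> (adj (induced T (verts T - {SC D})))\<^sup>*\<^sup>* (GC (gc w)) (HC (hc w2))"
    using separate[OF connT] by blast
  have sep: "\<not> (adj (induced T (verts T - {SC D})))\<^sup>*\<^sup>* (nd w) (nd w2)" using sep0 nw nw2 by simp
  let ?P = "SC D"
  obtain p1 q1 where pq: "zs = p1 @ w # q1" using split_list[OF w(1)] by blast
  define rest where "rest = q1 @ p1"
  have ceZ': "ce (w # rest) = ce zs" unfolding rest_def pq using ce_rot[of p1 "w # q1"] by simp
  have setZ': "set (w # rest) = set zs" unfolding rest_def pq by auto
  have cZ': "cyc (edges W) (w # rest)" using c cyc_rot[of "edges W" p1 "w # q1"] unfolding rest_def pq by simp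
  have ndw_ne: "nd w \<noteq> ?P" using nw by simp
  have ndw2_ne: "nd w2 \<noteq> ?P" using nw2 by simp
  have ce_sub: "ce zs' \<subseteq> edges W" if "cyc (edges W) zs'" for zs' using that unfolding cyc_def by blast
  show ?thesis
  proof (cases "\<exists>x\<in>set rest. nd x = ?P")
    case False
    have "pe (w # rest) \<subseteq> edges W" using cyc_pe[OF cZ'] .
    moreover have "set (w # rest) \<subseteq> verts W" using setZ' sZ by simp
    moreover have "\<forall>x\<in>set (w # rest). nd x \<noteq> ?P" using False ndw_ne by auto
    moreover have "w \<in> set (w # rest)" "w2 \<in> set (w # rest)" using setZ' w2(1) by auto
    ultimately have False using avoid_contra sep by blast
    then show ?thesis ..
  next
    case True
    then obtain R1 y R2 where r: "rest = R1 @ y # R2" "nd y = ?P" "\<forall>z\<in>set R1. nd z \<noteq> ?P"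
      using split_list_first_prop[of rest "\<lambda>x. nd x = ?P"] by blast
    show ?thesis
    proof (cases "\<exists>x\<in>set R2. nd x = ?P")
      case False
      let ?L = "R2 @ w # R1"
      have cZ'': "cyc (edges W) (y # ?L)"
        using cZ' cyc_rot[of "edges W" "w # R1" "y # R2"] unfolding r(1) by simp
      have "pe (y # ?L @ [y]) \<subseteq> edges W"
        using ce_sub[OF cZ''] unfolding ce_def by simp
      then have "pe ?L \<subseteq> edges W" using pe_infix[of ?L "[y]" "[y]"] by auto
      moreover have "set ?L \<subseteq> verts W" using setZ' sZ r(1) by auto
      moreover have "\<forall>x\<in>set ?L. nd x \<noteq> ?P" using False ndw_ne r(3) by auto
      moreover have "w \<in> set ?L" by simp
      moreover have "w2 \<in> set ?L"
      proof -
        have "w2 \<in> set (w # rest)" using setZ' w2(1) by simp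
        moreover have "w2 \<noteq> y" using r(2) ndw2_ne by auto
        ultimately show ?thesis using r(1) by auto
      qed
      ultimately have False using avoid_contra sep by blast
      then show ?thesis ..
    next
      case True
      then obtain Mid x R4 where r2: "R2 = Mid @ x # R4" "nd x = ?P" "\<forall>z\<in>set R4. nd z \<noteq> ?P"
        using split_list_last_prop[of R2 "\<lambda>x. nd x = ?P"] by blast
      define A where "A = R4 @ w # R1"
      define B where "B = Mid"
      have Z'eq: "w # rest = (w # R1 @ y # Mid) @ (x # R4)" using r(1) r2(1) by simp
      have Zf: "x # A @ y # B = (x # R4) @ (w # R1 @ y # Mid)" unfolding A_def B_def by simp
      have ceF: "ce (x # A @ y # B) = ce zs" using ceZ' ce_rot Z'eq Zf by metis
      have setF: "set (x # A @ y # B) = set zs" using setZ' Z'eq Zf by auto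
      have cF: "cyc (edges W) (x # A @ y # B)" using cZ' cyc_rot Z'eq Zf by metis
      have xy: "x \<in> S" "y \<in> S" "sc x = D" "sc y = D" using nd_SC r(2) r2(2) by metis+
      have "y \<in> sc y" unfolding sc_def using xy(2) SG by auto
      then have xyc: "(adj (induced G S))\<^sup>*\<^sup>* x y" using xy(3,4) unfolding sc_def by auto
      have wA: "\<exists>a\<in>set A. a \<notin> S" using w(3) unfolding A_def by auto
      have w2B: "w2 \<in> set B"
      proof (rule ccontr)
        assume nB: "w2 \<notin> set B"
        have "w2 \<noteq> x" "w2 \<noteq> y" using r(2) r2(2) ndw2_ne by auto
        then have w2A: "w2 \<in> set A" using nB setF w2(1) by auto
        have "pe (x # A @ y # B @ [x]) \<subseteq> edges W" using ce_sub[OF cF] unfolding ce_def by simp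
        then have "pe A \<subseteq> edges W" using pe_infix[of A "[x]" "y # B @ [x]"] by auto
        moreover have "set A \<subseteq> verts W" using setF sZ by auto
        moreover have "\<forall>z\<in>set A. nd z \<noteq> ?P" using r(3) r2(3) ndw_ne unfolding A_def by auto
        moreover have "w \<in> set A" unfolding A_def by simp
        ultimately show False using avoid_contra sep w2A by blast
      qed
      show ?thesis
        using ceF setF cF xy(1,2) xyc wA w2B w2H(2) by blast
    qed
  qed
qed

end


context setting begin

lemma Omega_rot: "Omega (xs @ ys) = Omega (ys @ xs)"
  unfolding Omega_def using ce_rot[of xs ys] by simp

lemma Omega_ce: "ce zs = ce zs' \<Longrightarrow> Omega zs = Omega zs'"
  unfolding Omega_def by simp

lemma ce_split: "ce (x # A @ y # B) = pe (x # A @ [y]) \<union> pe (y # B @ [x])"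
proof -
  have "ce (x # A @ y # B) = pe ((x # A) @ y # (B @ [x]))" unfolding ce_def by simp
  also have "\<dots> = pe ((x # A) @ [y]) \<union> pe (y # B @ [x])" by (rule pe_split)
  finally show ?thesis by simp
qed

lemma surg:
  assumes IH: "\<And>zs'. cyc (edges W) zs' \<Longrightarrow> card (set zs' - S) < n \<Longrightarrow> Omega zs'"
  shows "cyc (edges W) (x # A @ y # B) \<Longrightarrow> card (set (x # A @ y # B) - S) = n \<Longrightarrow>
    (\<exists>a\<in>set A. a \<notin> S) \<Longrightarrow> (\<exists>b\<in>set B. b \<notin> S) \<Longrightarrow>
    Q \<noteq> [] \<Longrightarrow> hd Q = x \<Longrightarrow> last Q = y \<Longrightarrow> distinct Q \<Longrightarrow> pe Q \<subseteq> edges (induced G S) \<Longrightarrow>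
    set Q \<subseteq> S \<Longrightarrow> Omega (x # A @ y # B)"
proof (induction "length Q" arbitrary: x A y B Q rule: less_induct)
  case less
  let ?Z = "x # A @ y # B"
  have cZ: "cyc (edges W) ?Z" and nZ: "card (set ?Z - S) = n"
    and wa: "\<exists>a\<in>set A. a \<notin> S" and wb: "\<exists>b\<in>set B. b \<notin> S"
    and Qne: "Q \<noteq> []" and Qh: "hd Q = x" and Ql: "last Q = y" and Qd: "distinct Q"
    and Qe: "pe Q \<subseteq> edges (induced G S)" and QS: "set Q \<subseteq> S" using less.prems by auto
  have dZ: "distinct ?Z" using cZ unfolding cyc_def by blast
  have xy: "x \<noteq> y" using dZ by auto
  obtain Q1 where Q1: "Q = x # Q1" using Qne Qh by (cases Q) auto
  have Q1ne: "Q1 \<noteq> []" using Q1 Ql xy by auto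
  define I where "I = butlast Q1"
  have "last Q1 = y" using Q1 Q1ne Ql by simp
  then have "Q1 = I @ [y]" using append_butlast_last_id[OF Q1ne] unfolding I_def by simp
  then have QI: "Q = x # I @ [y]" using Q1 by simp
  have xI: "x \<notin> set I" "y \<notin> set I" using Qd QI by auto
  have IS: "set I \<subseteq> S" "x \<in> S" "y \<in> S" using QS QI by auto
  have QW: "pe Q \<subseteq> edges W" using Qe by auto
  show ?case
  proof (cases "\<exists>q\<in>set I. q \<in> set ?Z")
    case True
    then obtain q where q: "q \<in> set I" "q \<in> set ?Z" by blast
    obtain I1 I2 where I12: "I = I1 @ q # I2" using split_list[OF q(1)] by blast
    have qxy: "q \<noteq> x" "q \<noteq> y" using q(1) xI by auto
    have qS: "q \<in> S" using q(1) IS by auto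
    define Qp where "Qp = x # I1 @ [q]"
    define Qs where "Qs = q # I2 @ [y]"
    have QQ: "Q = Qp @ (I2 @ [y])" "Q = (x # I1) @ Qs" unfolding Qp_def Qs_def QI I12 by simp_all
    have lp: "length Qp < length Q" "length Qs < length Q" "length (rev Qs) < length Q"
      unfolding QI I12 Qp_def Qs_def by simp_all
    have pp: "pe Qp \<subseteq> edges (induced G S)" using Qe pe_append_sub1[of Qp "I2 @ [y]"] QQ(1) by auto
    have ps: "pe Qs \<subseteq> edges (induced G S)" using Qe pe_append_sub2[of Qs "x # I1"] QQ(2) by auto
    have dp: "distinct Qp" "distinct Qs" using Qd QQ by (metis distinct_append)+
    have sp: "set Qp \<subseteq> S" "set Qs \<subseteq> S" using QS QI I12 unfolding Qp_def Qs_def by auto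
    have hp: "Qp \<noteq> []" "hd Qp = x" "last Qp = q" unfolding Qp_def by simp_all
    have hs: "Qs \<noteq> []" "hd Qs = q" "last Qs = y" unfolding Qs_def by simp_all
    have hr: "rev Qs \<noteq> []" "hd (rev Qs) = y" "last (rev Qs) = q" unfolding Qs_def by simp_all
    have qAB: "q \<in> set A \<or> q \<in> set B" using q(2) qxy by auto
    then show ?thesis
    proof
      assume qA: "q \<in> set A"
      obtain A1 A2 where A12: "A = A1 @ q # A2" using split_list[OF qA] by blast
      obtain a where a: "a \<in> set A" "a \<notin> S" using wa by blast
      have "a \<in> set A1 \<or> a \<in> set A2" using a A12 qS by auto
      then show ?thesis
      proof
        assume aA1: "a \<in> set A1"
        have eq: "x # A1 @ q # (A2 @ y # B) = ?Z" using A12 by simp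
        have "Omega (x # A1 @ q # (A2 @ y # B))"
        proof (rule less.hyps[OF lp(1)])
          show "cyc (edges W) (x # A1 @ q # (A2 @ y # B))" using cZ unfolding A12 by simp
          show "card (set (x # A1 @ q # (A2 @ y # B)) - S) = n" using nZ unfolding A12 by simp
          show "\<exists>a\<in>set A1. a \<notin> S" using aA1 a by blast
          show "\<exists>b\<in>set (A2 @ y # B). b \<notin> S" using wb by auto
        qed (use hp dp sp pp in auto)
        then show ?thesis unfolding A12 by simp
      next
        assume aA2: "a \<in> set A2"
        have eq: "q # A2 @ y # (B @ x # A1) = (q # A2 @ y # B) @ (x # A1)"
          and eq2: "?Z = (x # A1) @ (q # A2 @ y # B)" using A12 by simp_all
        have "Omega (q # A2 @ y # (B @ x # A1))"
        proof (rule less.hyps[OF lp(2)])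
          show "cyc (edges W) (q # A2 @ y # (B @ x # A1))" using cZ eq eq2 cyc_rot by metis
          show "card (set (q # A2 @ y # (B @ x # A1)) - S) = n" using nZ eq eq2
            by (metis set_append Un_commute)
          show "\<exists>a\<in>set A2. a \<notin> S" using aA2 a by blast
          show "\<exists>b\<in>set (B @ x # A1). b \<notin> S" using wb by auto
        qed (use hs dp sp ps in auto)
        then show ?thesis using eq eq2 Omega_rot by metis
      qed
    next
      assume qB: "q \<in> set B"
      obtain B1 B2 where B12: "B = B1 @ q # B2" using split_list[OF qB] by blast
      obtain b where b: "b \<in> set B" "b \<notin> S" using wb by blast
      have "b \<in> set B1 \<or> b \<in> set B2" using b B12 qS by auto
      then show ?thesis
      proof
        assume bB2: "b \<in> set B2"
        have eq: "x # (A @ y # B1) @ q # B2 = ?Z" using B12 by simp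
        have "Omega (x # (A @ y # B1) @ q # B2)"
        proof (rule less.hyps[OF lp(1)])
          show "cyc (edges W) (x # (A @ y # B1) @ q # B2)" using cZ unfolding B12 by simp
          show "card (set (x # (A @ y # B1) @ q # B2) - S) = n" using nZ unfolding B12 by simp
          show "\<exists>a\<in>set (A @ y # B1). a \<notin> S" using wa by auto
          show "\<exists>b\<in>set B2. b \<notin> S" using bB2 b by blast
        qed (use hp dp sp pp in auto)
        then show ?thesis unfolding B12 by simp
      next
        assume bB1: "b \<in> set B1"
        have eq: "y # B1 @ q # (B2 @ x # A) = (y # B1 @ q # B2) @ (x # A)"
          and eq2: "?Z = (x # A) @ (y # B1 @ q # B2)" using B12 by simp_all
        have "Omega (y # B1 @ q # (B2 @ x # A))"
        proof (rule less.hyps[OF lp(3)])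
          show "cyc (edges W) (y # B1 @ q # (B2 @ x # A))" using cZ eq eq2 cyc_rot by metis
          show "card (set (y # B1 @ q # (B2 @ x # A)) - S) = n" using nZ eq eq2
            by (metis set_append Un_commute)
          show "\<exists>a\<in>set B1. a \<notin> S" using bB1 b by blast
          show "\<exists>b\<in>set (B2 @ x # A). b \<notin> S" using wa by auto
          show "pe (rev Qs) \<subseteq> edges (induced G S)" using ps pe_rev by metis
          show "distinct (rev Qs)" using dp by simp
          show "set (rev Qs) \<subseteq> S" using sp by simp
        qed (use hr in auto)
        then show ?thesis using eq eq2 Omega_rot by metis
      qed
    qed
  next
    case False
    then have dI: "set I \<inter> set ?Z = {}" by blast
    define Z1 where "Z1 = x # A @ y # rev I"
    define Z2 where "Z2 = y # B @ x # I"
    have revQ: "rev Q = y # rev I @ [x]" unfolding QI by simp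
    have ceZ1: "ce Z1 = pe (x # A @ [y]) \<union> pe Q"
      unfolding Z1_def ce_split using pe_rev[of Q] revQ by simp
    have ceZ2: "ce Z2 = pe (y # B @ [x]) \<union> pe Q"
      unfolding Z2_def ce_split QI by simp
    have ceZ: "ce ?Z = pe (x # A @ [y]) \<union> pe (y # B @ [x])" by (rule ce_split)
    have ceZW: "ce ?Z \<subseteq> edges W" using cZ unfolding cyc_def by blast
    have dI': "distinct I" using Qd QI by simp
    have Ane: "A \<noteq> []" "B \<noteq> []" using wa wb by auto
    have c1: "cyc (edges W) Z1" unfolding cyc_def
    proof (intro conjI)
      show "distinct Z1" unfolding Z1_def using dZ dI dI' by auto
      show "3 \<le> length Z1" unfolding Z1_def using Ane by (cases A) auto
      show "ce Z1 \<subseteq> edges W" using ceZ1 ceZ ceZW QW by auto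
    qed
    have c2: "cyc (edges W) Z2" unfolding cyc_def
    proof (intro conjI)
      show "distinct Z2" unfolding Z2_def using dZ dI dI' by auto
      show "3 \<le> length Z2" unfolding Z2_def using Ane by (cases B) auto
      show "ce Z2 \<subseteq> edges W" using ceZ2 ceZ ceZW QW by auto
    qed
    have fin: "finite (set ?Z - S)" by simp
    have n1: "card (set Z1 - S) < n"
    proof -
      have "set Z1 - S = set A - S" unfolding Z1_def using IS by auto
      moreover obtain b where "b \<in> set B" "b \<notin> S" using wb by blast
      moreover have "set A \<inter> set B = {}" using dZ by auto
      ultimately have "set Z1 - S \<subset> set ?Z - S" by auto
      then show ?thesis using nZ psubset_card_mono[OF fin] by blast
    qed
    have n2: "card (set Z2 - S) < n"
    proof -
      have "set Z2 - S = set B - S" unfolding Z2_def using IS by auto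
      moreover obtain a where "a \<in> set A" "a \<notin> S" using wa by blast
      moreover have "set A \<inter> set B = {}" using dZ by auto
      ultimately have "set Z2 - S \<subset> set ?Z - S" by auto
      then show ?thesis using nZ psubset_card_mono[OF fin] by blast
    qed
    have O1: "Omega Z1" using IH[OF c1 n1] .
    have O2: "Omega Z2" using IH[OF c2 n2] .
    define e0 where "e0 = {x, hd (I @ [y])}"
    have e0: "e0 \<in> pe Q" unfolding e0_def QI by (simp add: pe_Cons)
    have toe0: "R\<^sup>*\<^sup>* e e0 \<and> R\<^sup>*\<^sup>* e0 e" if "e \<in> ce ?Z" for e
    proof -
      have "e \<in> ce Z1 \<or> e \<in> ce Z2" using that ceZ ceZ1 ceZ2 by auto
      moreover have "e0 \<in> ce Z1" "e0 \<in> ce Z2" using e0 ceZ1 ceZ2 by auto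
      ultimately show ?thesis using O1 O2 unfolding Omega_def by blast
    qed
    show ?thesis unfolding Omega_def
    proof (intro ballI)
      fix e e' assume "e \<in> ce ?Z" "e' \<in> ce ?Z"
      then show "R\<^sup>*\<^sup>* e e'" using toe0 by (meson rtranclp_trans)
    qed
  qed
qed

end


context setting begin

theorem omega: "cyc (edges W) zs \<Longrightarrow> Omega zs"
proof (induction "card (set zs - S)" arbitrary: zs rule: less_induct)
  case less
  have c: "cyc (edges W) zs" using less.prems .
  have sZ: "set zs \<subseteq> verts W" using cyc_verts[OF c] .
  show ?case
  proof (cases "set zs \<subseteq> verts G")
    case True then show ?thesis using pure_G[OF c] by blast
  next
    case nG: False
    show ?thesis
    proof (cases "set zs \<subseteq> verts H")
      case True then show ?thesis using pure_H[OF c] by blast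
    next
      case nH: False
      obtain w where w: "w \<in> set zs" "w \<notin> verts H" using nH by blast
      obtain w2 where w2: "w2 \<in> set zs" "w2 \<notin> verts G" using nG by blast
      have wG: "w \<in> verts G" "w \<notin> S" using w sZ SH by auto
      obtain x A y B where d: "ce (x # A @ y # B) = ce zs" "set (x # A @ y # B) = set zs"
        "cyc (edges W) (x # A @ y # B)" "x \<in> S" "y \<in> S" "(adj (induced G S))\<^sup>*\<^sup>* x y"
        "\<exists>a\<in>set A. a \<notin> S" "\<exists>b\<in>set B. b \<notin> S"
        using seg[OF c w(1) wG w2] by blast
      obtain Q where Q: "Q \<noteq> []" "hd Q = x" "last Q = y" "pe Q \<subseteq> edges (induced G S)" "distinct Q"
        using path_exists[OF d(6)] by blast
      have QS: "set Q \<subseteq> S"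
      proof -
        have "set Q \<subseteq> insert (hd Q) (\<Union> (pe Q))" by (rule set_sub_pe)
        moreover have "\<Union> (pe Q) \<subseteq> S" using Q(4) by auto
        ultimately show ?thesis using Q(2) d(4) by auto
      qed
      have "Omega (x # A @ y # B)"
      proof (rule surg)
        fix zs' assume "cyc (edges W) zs'" "card (set zs' - S) < card (set zs - S)"
        then show "Omega zs'" using less.hyps by blast
      next
        show "card (set (x # A @ y # B) - S) = card (set zs - S)" using d(2) by simp
      qed (use d Q QS in auto)
      then show ?thesis using Omega_ce[OF d(1)] by simp
    qed
  qed
qed

end


lemma ear:
  assumes wF: "wf_graph F" and bF: "biconn F" and sM: "subgraph M F" and bM: "biconn M"
    and m2: "m1 \<noteq> m2" "m1 \<in> verts M" "m2 \<in> verts M"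
    and f: "f \<in> edges F" "f \<notin> edges M"
  shows "\<exists>zs u v. cyc (edges F) zs \<and> u \<noteq> v \<and> u \<in> verts M \<and> v \<in> verts M \<and> u \<in> set zs \<and> v \<in> set zs
     \<and> ce zs \<inter> edges M \<noteq> {} \<and> \<not> ce zs \<subseteq> edges M"
proof -
  have wM: "wf_graph M" using sM subgraph_wf by blast
  have MF: "verts M \<subseteq> verts F" "edges M \<subseteq> edges F" using sM unfolding subgraph_def by auto
  obtain a b where ab: "f = {a, b}" "a \<noteq> b" "a \<in> verts F" "b \<in> verts F" using wf_edgeE[OF wF f(1)] by metis
  show ?thesis
  proof (cases "a \<in> verts M \<and> b \<in> verts M")
    case True
    have cab: "(adj M)\<^sup>*\<^sup>* a b" using biconn_conn[OF bM] True by blast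
    obtain xs where xs: "xs \<noteq> []" "hd xs = a" "last xs = b" "pe xs \<subseteq> edges M" "distinct xs"
      using path_exists[OF cab] by blast
    have ce: "ce xs = pe xs \<union> {{b, a}}" using ce_nonempty[OF xs(1)] xs(2,3) by simp
    obtain xs' where xs': "xs = a # xs'" using xs(1,2) by (cases xs) auto
    have "xs' \<noteq> []" using xs' xs(3) ab(2) by auto
    then obtain c xs'' where c: "xs' = c # xs''" by (cases xs') auto
    have "xs'' \<noteq> []"
    proof
      assume "xs'' = []"
      then have "xs = [a, b]" using xs' c xs(3) by simp
      then have "{a, b} \<in> edges M" using xs(4) by simp
      then show False using f ab by simp
    qed
    then have l3: "3 \<le> length xs" using xs' c by (cases xs'') auto
    have pne: "{a, c} \<in> pe xs" using xs' c by simp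
    show ?thesis
    proof (intro exI conjI)
      show "cyc (edges F) xs" unfolding cyc_def using xs(5) l3 ce xs(4) MF f ab by (auto simp: insert_commute)
      show "a \<noteq> b" "a \<in> verts M" "b \<in> verts M" using ab True by auto
      show "a \<in> set xs" "b \<in> set xs" using xs(1,2,3) by auto
      show "ce xs \<inter> edges M \<noteq> {}" using pne xs(4) ce by blast
      show "\<not> ce xs \<subseteq> edges M" using ce f ab by (auto simp: insert_commute)
    qed
  next
    case False
    then obtain c where c: "c \<in> verts F" "c \<notin> verts M" using ab by blast
    define Out where "Out = verts F - verts M"
    define Reach where "Reach x \<longleftrightarrow> (adj (induced F Out))\<^sup>*\<^sup>* c x" for x
    define Att where "Att = {v \<in> verts M. \<exists>r. Reach r \<and> adj F r v}"
    have cO: "c \<in> Out" using c unfolding Out_def by simp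
    have RO: "Reach x \<Longrightarrow> x \<in> Out" for x
      unfolding Reach_def using rtranclp_adj_induced_in cO by metis
    have closure: "x \<in> Out \<and> Reach x"
      if conn: "(adj (induced F (verts F - Z)))\<^sup>*\<^sup>* c x" and ZA: "Att \<subseteq> Z" for x Z
      using conn
    proof (induction rule: rtranclp_induct)
      case base then show ?case using cO unfolding Reach_def by simp
    next
      case (step x y)
      have xy: "adj F x y" "y \<notin> Z" using step(2) by auto
      have yF: "y \<in> verts F" using wf_adj[OF wF xy(1)] by blast
      show ?case
      proof (cases "y \<in> Out")
        case True
        have xyO: "adj (induced F Out) x y" using xy(1) True step(3) by simp
        have r: "(adj (induced F Out))\<^sup>*\<^sup>* c x" using step(3) unfolding Reach_def by blast
        have "(adj (induced F Out))\<^sup>*\<^sup>* c y" using r xyO by (rule rtranclp.rtrancl_into_rtrancl)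
        then have "Reach y" unfolding Reach_def .
        then show ?thesis using True by simp
      next
        case False
        then have "y \<in> verts M" using yF unfolding Out_def by simp
        then have "y \<in> Att" unfolding Att_def using step(3) xy(1) by blast
        then show ?thesis using ZA xy(2) by blast
      qed
    qed
    have Attne: "Att \<noteq> {}"
    proof
      assume A0: "Att = {}"
      have "(adj F)\<^sup>*\<^sup>* c m1" using biconn_conn[OF bF c(1)] m2(2) MF by blast
      then have "(adj (induced F (verts F - {})))\<^sup>*\<^sup>* c m1"
      proof (rule rtranclp_adj_mono')
        fix x y assume "adj F x y" then show "adj (induced F (verts F - {})) x y"
          using wf_adj[OF wF] by simp
      qed
      then have "m1 \<in> Out" using closure A0 by blast
      then show False using m2(2) unfolding Out_def by simp
    qed
    have two: "\<exists>u v. u \<in> Att \<and> v \<in> Att \<and> u \<noteq> v"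
    proof (rule ccontr)
      assume "\<not> ?thesis"
      then obtain w where wA: "Att \<subseteq> {w}" "w \<in> verts M" using Attne unfolding Att_def by blast
      obtain m where m: "m \<in> verts M" "m \<noteq> w" using m2 by blast
      have "c \<noteq> w" using c wA by blast
      then have "(adj (induced F (verts F - {w})))\<^sup>*\<^sup>* c m"
        using biconn_avoid[OF wF bF c(1), of m w] m MF by blast
      then have "m \<in> Out" using closure wA by blast
      then show False using m unfolding Out_def by simp
    qed
    then obtain u v where uv: "u \<in> Att" "v \<in> Att" "u \<noteq> v" by blast
    obtain r1 where r1: "Reach r1" "adj F r1 u" using uv(1) unfolding Att_def by blast
    obtain r2 where r2: "Reach r2" "adj F r2 v" using uv(2) unfolding Att_def by blast
    have uvM: "u \<in> verts M" "v \<in> verts M" using uv unfolding Att_def by auto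
    have "(adj (induced F Out))\<^sup>*\<^sup>* r1 c" using r1(1) unfolding Reach_def by (rule rtranclp_adj_sym)
    then have crr: "(adj (induced F Out))\<^sup>*\<^sup>* r1 r2"
      using r2(1) unfolding Reach_def by (rule rtranclp_trans)
    obtain L where L: "L \<noteq> []" "hd L = r1" "last L = r2" "pe L \<subseteq> edges (induced F Out)" "distinct L"
      using path_exists[OF crr] by blast
    have LO: "set L \<subseteq> Out"
    proof -
      have "set L \<subseteq> insert (hd L) (\<Union> (pe L))" by (rule set_sub_pe)
      then show ?thesis using L(2,4) RO[OF r1(1)] by auto
    qed
    have cvu: "(adj M)\<^sup>*\<^sup>* v u" using biconn_conn[OF bM] uvM by blast
    obtain Q where Q: "Q \<noteq> []" "hd Q = v" "last Q = u" "pe Q \<subseteq> edges M" "distinct Q"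
      using path_exists[OF cvu] by blast
    have QM: "set Q \<subseteq> verts M"
    proof -
      have "set Q \<subseteq> insert (hd Q) (\<Union> (pe Q))" by (rule set_sub_pe)
      then show ?thesis using Q(2,4) uvM wf_edge_sub[OF wM] by auto
    qed
    define J where "J = butlast Q"
    have QJ: "Q = J @ [u]" using append_butlast_last_id[OF Q(1)] Q(3) unfolding J_def by simp
    have Jne: "J \<noteq> []" using QJ Q(2) uv(3) by (cases J) auto
    have hJ: "hd J = v" using QJ Q(2) Jne by simp
    define zs where "zs = u # L @ J"
    have OM: "Out \<inter> verts M = {}" unfolding Out_def by blast
    have dz: "distinct zs" unfolding zs_def using L(5) Q(5) QJ LO QM OM uvM by auto
    have lz: "3 \<le> length zs" unfolding zs_def using L(1) Jne by (cases L; cases J) auto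
    have cez: "ce zs = insert {u, r1} (pe L \<union> insert {r2, v} (pe Q))"
    proof -
      have "ce zs = pe (u # L @ J @ [u])" unfolding zs_def ce_def by simp
      also have "\<dots> = pe ([u] @ (L @ Q))" using QJ by simp
      also have "\<dots> = insert {u, r1} (pe (L @ Q))" using L(1,2) by (simp add: pe_Cons)
      also have "pe (L @ Q) = pe L \<union> pe Q \<union> {{r2, v}}" using pe_append[OF L(1) Q(1)] L(3) Q(2) by simp
      finally show ?thesis by auto
    qed
    have r1O: "r1 \<notin> verts M" using RO[OF r1(1)] unfolding Out_def by simp
    show ?thesis
    proof (intro exI conjI)
      show "cyc (edges F) zs" unfolding cyc_def
      proof (intro conjI dz lz)
        have "{u, r1} \<in> edges F" "{r2, v} \<in> edges F" using r1(2) r2(2) by (auto simp: adj_def insert_commute)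
        moreover have "pe L \<subseteq> edges F" using L(4) by auto
        moreover have "pe Q \<subseteq> edges F" using Q(4) MF by auto
        ultimately show "ce zs \<subseteq> edges F" using cez by auto
      qed
      show "u \<noteq> v" "u \<in> verts M" "v \<in> verts M" using uv uvM by auto
      show "u \<in> set zs" "v \<in> set zs" unfolding zs_def using hJ Jne by auto
      show "ce zs \<inter> edges M \<noteq> {}"
      proof -
        obtain q Q' where "Q = v # q # Q'" using Q(1,2,3) uv(3) by (cases Q; cases "tl Q") auto
        then have "{v, q} \<in> pe Q" by simp
        then show ?thesis using Q(4) cez by blast
      qed
      show "\<not> ce zs \<subseteq> edges M"
      proof
        assume "ce zs \<subseteq> edges M"
        then have "{u, r1} \<in> edges M" using cez by auto
        then show False using wf_edge_sub[OF wM] r1O by blast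
      qed
    qed
  qed
qed


lemma cyc_verts_gen:
  assumes w: "wf_graph X" and c: "cyc (edges X) zs" shows "set zs \<subseteq> verts X"
proof -
  have ne: "zs \<noteq> []" and ce: "ce zs \<subseteq> edges X" using c unfolding cyc_def by auto
  have "set zs \<subseteq> insert (hd zs) (\<Union> (pe zs))" by (rule set_sub_pe)
  moreover have "pe zs \<subseteq> edges X" "{last zs, hd zs} \<in> edges X" using ce ce_nonempty[OF ne] by auto
  ultimately show ?thesis using wf_edge_sub[OF w] by blast
qed

lemma cyc_mono: "cyc E zs \<Longrightarrow> E \<subseteq> E' \<Longrightarrow> cyc E' zs"
  unfolding cyc_def by blast

context setting begin

definition NB where "NB = nontriv_blocks (induced G S)"

lemma wGS: "wf_graph (induced G S)" using wf_induced[OF wG] .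

lemma nb_of_edge:
  assumes "e \<in> edges G" "e \<subseteq> S"
  obtains C where "C \<in> NB" "e \<in> edges C"
proof -
  have e: "e \<in> edges (induced G S)" using assms by simp
  obtain C where C: "is_block (induced G S) C" "e \<in> edges C" using edge_in_block[OF wGS e] by blast
  have wC: "wf_graph C" using block_sub[OF C(1)] subgraph_wf by blast
  obtain u v where uv: "e = {u, v}" "u \<noteq> v" using wf_edgeE[OF wC C(2)] by metis
  have "e \<subseteq> verts C" using wf_edge_sub[OF wC C(2)] .
  moreover have "finite (verts C)" using wC unfolding wf_graph_def by blast
  ultimately have "card e \<le> card (verts C)" by (rule card_mono[rotated])
  moreover have "card e = 2" using uv by simp
  ultimately have "C \<in> NB" unfolding NB_def nontriv_blocks_def using C(1) by simp
  then show ?thesis using that C(2) by blast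
qed

lemma nb_sub:
  assumes "C \<in> NB"
  shows "subgraph C G" "subgraph C H" "biconn C"
proof -
  have b: "is_block (induced G S) C" using assms unfolding NB_def nontriv_blocks_def by blast
  have s: "subgraph C (induced G S)" "biconn C" using block_sub[OF b] block_biconn[OF b] by auto
  have wC: "wf_graph C" using s(1) subgraph_wf by blast
  have vs: "verts C \<subseteq> verts G \<inter> S" and es: "edges C \<subseteq> {e \<in> edges G. e \<subseteq> S}"
    using s(1) unfolding subgraph_def by auto
  show "subgraph C G" unfolding subgraph_def using wC vs es by auto
  have "edges C \<subseteq> edges H" using es Sedge_GH by blast
  then show "subgraph C H" unfolding subgraph_def using wC vs SH by auto
  show "biconn C" using s(2) .
qed

lemma C_in_piece:
  assumes C: "C \<in> NB" "e \<in> edges C" and P: "piece P" "e \<in> edges P"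
  shows "subgraph C P"
proof -
  have wC: "wf_graph C" using nb_sub(1)[OF C(1)] subgraph_wf by blast
  obtain u v where uv: "e = {u, v}" "u \<noteq> v" "u \<in> verts C" "v \<in> verts C" using wf_edgeE[OF wC C(2)] by metis
  show ?thesis
  proof (cases "is_block G P")
    case True
    have wP: "wf_graph P" using block_sub[OF True] subgraph_wf by blast
    have "u \<in> verts P" "v \<in> verts P" using wf_edge_sub[OF wP P(2)] uv(1) by auto
    then show ?thesis using block_absorb[OF wG True nb_sub(1)[OF C(1)] nb_sub(3)[OF C(1)] uv(2)] uv(3,4) by blast
  next
    case False
    then have HP: "is_block H P" using P(1) unfolding piece_def by blast
    have wP: "wf_graph P" using block_sub[OF HP] subgraph_wf by blast
    have "u \<in> verts P" "v \<in> verts P" using wf_edge_sub[OF wP P(2)] uv(1) by auto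
    then show ?thesis using block_absorb[OF wH HP nb_sub(2)[OF C(1)] nb_sub(3)[OF C(1)] uv(2)] uv(3,4) by blast
  qed
qed

lemma piece_S:
  assumes "piece P" "e \<in> edges P" "e \<subseteq> S"
  shows "S_block G S P \<or> S_block H S P"
proof (cases "is_block G P")
  case True
  have "e \<in> edges G" using block_sub[OF True] assms(2) unfolding subgraph_def by blast
  then show ?thesis using True assms(2,3) unfolding S_block_def by auto
next
  case False
  then have HP: "is_block H P" using assms(1) unfolding piece_def by blast
  have "e \<in> edges H" using block_sub[OF HP] assms(2) unfolding subgraph_def by blast
  then show ?thesis using HP assms(2,3) unfolding S_block_def by auto
qed

definition Good :: "('v graph \<Rightarrow> 'a) \<Rightarrow> 'a \<Rightarrow> 'v set \<Rightarrow> bool" where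
  "Good g v0 f \<longleftrightarrow> (\<forall>P. piece P \<and> f \<in> edges P \<longrightarrow> (\<forall>C\<in>NB. subgraph C P \<longrightarrow> g C = v0))"

definition Hyp3 :: "('v graph \<Rightarrow> 'a) \<Rightarrow> bool" where
  "Hyp3 g \<longleftrightarrow> (\<forall>C1\<in>NB. \<forall>C2\<in>NB.
    (\<exists>F'. S_block G S F' \<and> subgraph C1 F' \<and> subgraph C2 F') \<or>
    (\<exists>F'. S_block H S F' \<and> subgraph C1 F' \<and> subgraph C2 F') \<longrightarrow> g C1 = g C2)"

lemma hyp3_piece:
  assumes h: "Hyp3 g" and P: "piece P" "e \<in> edges P" "e \<subseteq> S"
    and C: "C1 \<in> NB" "C2 \<in> NB" "subgraph C1 P" "subgraph C2 P"
  shows "g C1 = g C2"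
  using piece_S[OF P] h C unfolding Hyp3_def by blast

lemma R_sym: "R f f' \<Longrightarrow> R f' f" unfolding R_def by blast

lemma piece_wf: "piece P \<Longrightarrow> wf_graph P"
  unfolding piece_def using block_sub subgraph_wf by blast

lemma shared_edge:
  assumes P: "piece P" "piece P'" "P \<noteq> P'" "f \<in> edges P" "f \<in> edges P'"
  shows "f \<subseteq> S \<and> f \<in> edges G"
proof -
  obtain u v where uv: "f = {u, v}" "u \<noteq> v" using wf_edgeE[OF piece_wf[OF P(1)] P(4)] by metis
  have inP: "u \<in> verts P" "v \<in> verts P" using wf_edge_sub[OF piece_wf[OF P(1)] P(4)] uv by auto
  have inP': "u \<in> verts P'" "v \<in> verts P'" using wf_edge_sub[OF piece_wf[OF P(2)] P(5)] uv by auto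
  have GG: "\<not> (is_block G P \<and> is_block G P')"
    using blocks_eq[OF wG _ _ uv(2) inP(1) inP'(1) inP(2) inP'(2)] P(3) by blast
  have HH: "\<not> (is_block H P \<and> is_block H P')"
    using blocks_eq[OF wH _ _ uv(2) inP(1) inP'(1) inP(2) inP'(2)] P(3) by blast
  have "f \<in> edges G \<and> f \<in> edges H"
  proof -
    have eG: "is_block G Q \<Longrightarrow> f \<in> edges Q \<Longrightarrow> f \<in> edges G" for Q
      using block_sub unfolding subgraph_def by blast
    have eH: "is_block H Q \<Longrightarrow> f \<in> edges Q \<Longrightarrow> f \<in> edges H" for Q
      using block_sub unfolding subgraph_def by blast
    show ?thesis using P(1,2,4,5) GG HH eG eH unfolding piece_def by blast
  qed
  then have "f \<subseteq> verts G" "f \<subseteq> verts H" using wf_edge_sub[OF wG] wf_edge_sub[OF wH] by blast+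
  then have "f \<subseteq> S" using VGH by blast
  then show ?thesis using \<open>f \<in> edges G \<and> f \<in> edges H\<close> by blast
qed

lemma Good_step:
  assumes h: "Hyp3 g" and gf: "Good g v0 f" and r: "R f f'"
  shows "Good g v0 f'"
  unfolding Good_def
proof (intro allI impI ballI)
  fix P C assume P: "piece P \<and> f' \<in> edges P" and C: "C \<in> NB" "subgraph C P"
  obtain P0 where P0: "piece P0" "f \<in> edges P0" "f' \<in> edges P0" using r unfolding R_def by blast
  show "g C = v0"
  proof (cases "P = P0")
    case True then show ?thesis using gf P0 C unfolding Good_def by blast
  next
    case False
    have sf: "f' \<subseteq> S" "f' \<in> edges G" using shared_edge[OF P0(1) _ _ P0(3)] P False by blast+
    obtain C' where C': "C' \<in> NB" "f' \<in> edges C'" using nb_of_edge[OF sf(2,1)] by blast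
    have "subgraph C' P0" using C_in_piece[OF C' P0(1,3)] .
    then have "g C' = v0" using gf P0 C'(1) unfolding Good_def by blast
    moreover have "subgraph C' P" using C_in_piece[OF C'] P by blast
    moreover have "g C = g C'" using hyp3_piece[OF h _ _ sf(1) C(1) C'(1) C(2)] P \<open>subgraph C' P\<close> by blast
    ultimately show ?thesis by simp
  qed
qed

lemma Good_rtranclp:
  assumes h: "Hyp3 g" and r: "R\<^sup>*\<^sup>* f f'" and gf: "Good g v0 f"
  shows "Good g v0 f'"
  using r gf by (induction rule: rtranclp_induct) (auto intro: Good_step[OF h])

lemma R_rtranclp_sym: "R\<^sup>*\<^sup>* f f' \<Longrightarrow> R\<^sup>*\<^sup>* f' f"
proof (induction rule: rtranclp_induct)
  case base then show ?case by simp
next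
  case (step y z)
  have "R z y" using R_sym[OF step(2)] .
  then show ?case using step(3) by (rule converse_rtranclp_into_rtranclp)
qed

end


context setting begin

lemma main:
  assumes h: "Hyp3 g" and F: "is_block W F" and e1F: "e1 \<in> edges F" and g1: "Good g v0 e1"
    and e2F: "e2 \<in> edges F"
  shows "Good g v0 e2"
proof -
  have sF: "subgraph F W" and bF: "biconn F" using block_sub[OF F] block_biconn[OF F] by auto
  have wF: "wf_graph F" using sF subgraph_wf by blast
  have FW: "verts F \<subseteq> verts W" "edges F \<subseteq> edges W" using sF unfolding subgraph_def by auto
  obtain u1 v1 where uv1: "e1 = {u1, v1}" "u1 \<noteq> v1" using wf_edgeE[OF wF e1F] by metis
  define Pm where "Pm M \<longleftrightarrow> subgraph M F \<and> biconn M \<and> e1 \<in> edges M \<and> (\<forall>f\<in>edges M. Good g v0 f)" for M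
  have P0: "Pm (K2 u1 v1)" unfolding Pm_def
    using subgraph_K2[OF wF _ uv1(2)] e1F uv1 biconn_K2[OF uv1(2)] g1 by auto
  obtain M where M: "Pm M" and Mmax: "\<And>M'. Pm M' \<Longrightarrow> subgraph M M' \<Longrightarrow> M' = M"
    using max_subgraph[of F Pm, OF wF P0] unfolding Pm_def by blast
  have sM: "subgraph M F" and bM: "biconn M" and e1M: "e1 \<in> edges M" and gM: "\<forall>f\<in>edges M. Good g v0 f"
    using M unfolding Pm_def by auto
  have wM: "wf_graph M" using sM subgraph_wf by blast
  have uvM: "u1 \<in> verts M" "v1 \<in> verts M" using wf_edge_sub[OF wM e1M] uv1(1) by auto
  have "edges F \<subseteq> edges M"
  proof (rule ccontr)
    assume "\<not> edges F \<subseteq> edges M"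
    then obtain f where f: "f \<in> edges F" "f \<notin> edges M" by blast
    obtain zs u v where z: "cyc (edges F) zs" "u \<noteq> v" "u \<in> verts M" "v \<in> verts M" "u \<in> set zs" "v \<in> set zs"
      "ce zs \<inter> edges M \<noteq> {}" "\<not> ce zs \<subseteq> edges M"
      using ear[OF wF bF sM bM uv1(2) uvM f] by blast
    have cW: "cyc (edges W) zs" using cyc_mono[OF z(1) FW(2)] .
    have Om: "Omega zs" using omega[OF cW] .
    have dz: "distinct zs" "2 \<le> length zs" using z(1) unfolding cyc_def by auto
    have wC: "wf_graph (Cg zs)" using wf_Cg[OF dz] .
    have bC: "biconn (Cg zs)" using cyc_biconn[OF z(1)] .
    let ?M' = "gunion M (Cg zs)"
    have "Pm ?M'" unfolding Pm_def
    proof (intro conjI ballI)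
      have "set zs \<subseteq> verts F" using cyc_verts_gen[OF wF z(1)] .
      moreover have "ce zs \<subseteq> edges F" using z(1) unfolding cyc_def by blast
      ultimately show "subgraph ?M' F" using sM wf_gunion[OF wM wC] unfolding subgraph_def by auto
      show "biconn ?M'" using biconn_union[OF wM wC bM bC z(2) z(3)] z(4,5,6) by simp
      show "e1 \<in> edges ?M'" using e1M by simp
      fix f assume "f \<in> edges ?M'"
      then have "f \<in> edges M \<or> f \<in> ce zs" by simp
      then show "Good g v0 f"
      proof
        assume "f \<in> edges M" then show ?thesis using gM by blast
      next
        assume fz: "f \<in> ce zs"
        obtain e where e: "e \<in> ce zs" "e \<in> edges M" using z(7) by blast
        have "R\<^sup>*\<^sup>* e f" using Om e(1) fz unfolding Omega_def by blast
        moreover have "Good g v0 e" using gM e(2) by blast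
        ultimately show ?thesis using Good_rtranclp[OF h] by blast
      qed
    qed
    moreover have "subgraph M ?M'" using wM unfolding subgraph_def by auto
    ultimately have "?M' = M" using Mmax by blast
    then have "ce zs \<subseteq> edges M" by (metis edges_Cg edges_gunion Un_upper2)
    then show False using z(8) by blast
  qed
  then show ?thesis using gM e2F by blast
qed

end

lemma biconn_edge:
  assumes "biconn B" "u \<in> verts B" "v \<in> verts B" "u \<noteq> v"
  shows "\<exists>e. e \<in> edges B"
proof -
  have c: "(adj B)\<^sup>*\<^sup>* u v" using biconn_conn[OF assms(1-3)] .
  obtain y where "adj B u y" using c assms(4) by (cases rule: converse_rtranclpE) auto
  then show ?thesis unfolding adj_def by blast
qed

lemma nontriv_edge:
  assumes "B \<in> nontriv_blocks X"
  shows "\<exists>e. e \<in> edges B"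
proof -
  have bb: "is_block X B" "2 \<le> card (verts B)" using assms unfolding nontriv_blocks_def by auto
  have b: "biconn B" using block_biconn[OF bb(1)] .
  have ne: "verts B \<noteq> {}"
  proof
    assume e: "verts B = {}"
    have "card (verts B) = 0" by (simp only: e card.empty)
    then show False using bb(2) by simp
  qed
  then obtain u where u: "u \<in> verts B" by blast
  have c1: "card (verts B - {u}) \<ge> 1" using card_Diff_singleton[OF u] bb(2) by simp
  have "verts B - {u} \<noteq> {}"
  proof
    assume e: "verts B - {u} = {}"
    have "card (verts B - {u}) = 0" by (simp only: e card.empty)
    then show False using c1 by simp
  qed
  then obtain v where v: "v \<in> verts B - {u}" by blast
  have "u \<noteq> v" "v \<in> verts B" using v by auto
  then show ?thesis using biconn_edge[OF b u] by blast
qed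


theorem lemma3p5:
  fixes A :: "'a set" and G H F B1 B2 :: "'v graph" and S :: "'v set" and d :: nat
    and labG labH :: "'v \<Rightarrow> nat" and g :: "'v graph \<Rightarrow> 'a"
  assumes "labeled_boundaried d G S labG"
    and "labeled_boundaried d H S labH"
    and "compatible G labG H labH S"
    and "\<forall>B\<in>nontriv_blocks (induced G S). g B \<in> A"
    and "\<forall>F'. S_block G S F' \<or> S_block H S F' \<longrightarrow> chordal F'"
    and "\<not> has_cycle (aux_sum G H S)"
    and "\<forall>C1\<in>nontriv_blocks (induced G S). \<forall>C2\<in>nontriv_blocks (induced G S).
           (\<exists>F'. S_block G S F' \<and> subgraph C1 F' \<and> subgraph C2 F') \<or>
           (\<exists>F'. S_block H S F' \<and> subgraph C1 F' \<and> subgraph C2 F') \<longrightarrow> g C1 = g C2"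
    and "S_block (bsum G H) S F"
    and "B1 \<in> nontriv_blocks (induced G S)"
    and "B2 \<in> nontriv_blocks (induced G S)"
    and "verts B1 \<subseteq> verts F" and "verts B2 \<subseteq> verts F"
  shows "g B1 = g B2"
proof -
  have wG: "wf_graph G" and SG: "S \<subseteq> verts G" using assms(1) unfolding labeled_boundaried_def by auto
  have wH: "wf_graph H" and SH: "S \<subseteq> verts H" using assms(2) unfolding labeled_boundaried_def by auto
  have disj: "(verts G - S) \<inter> (verts H - S) = {}" and ind: "induced G S = induced H S"
    using assms(3) unfolding compatible_def by auto
  interpret s: setting G H S using wG wH SG SH disj ind assms(6) by unfold_locales
  have F: "is_block (gunion G H) F" using assms(8) unfolding S_block_def bsum_def by blast
  have NB: "s.NB = nontriv_blocks (induced G S)" unfolding s.NB_def ..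
  have h: "s.Hyp3 g" unfolding s.Hyp3_def NB using assms(7) by blast
  have edgeB: "\<exists>e. e \<in> edges B \<and> e \<in> edges F \<and> e \<in> edges G \<and> e \<subseteq> S"
    if B: "B \<in> nontriv_blocks (induced G S)" "verts B \<subseteq> verts F" for B
  proof -
    obtain e where e: "e \<in> edges B" using nontriv_edge[OF B(1)] by blast
    have bB: "is_block (induced G S) B" using B(1) unfolding nontriv_blocks_def by blast
    have sB: "subgraph B (induced G S)" using block_sub[OF bB] .
    have wB: "wf_graph B" using sB subgraph_wf by blast
    have eG: "e \<in> edges G" "e \<subseteq> S" using sB e unfolding subgraph_def by auto
    obtain u v where uv: "e = {u, v}" "u \<noteq> v" "u \<in> verts B" "v \<in> verts B" using wf_edgeE[OF wB e] by metis
    have "{u, v} \<in> edges (gunion G H)" using eG uv(1) by simp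
    then have "{u, v} \<in> edges F" using block_edge[OF s.wW F _ uv(2)] uv(3,4) B(2) by blast
    then show ?thesis using e eG uv(1) by blast
  qed
  obtain e1 where e1: "e1 \<in> edges B1" "e1 \<in> edges F" "e1 \<in> edges G" "e1 \<subseteq> S"
    using edgeB[OF assms(9,11)] by blast
  obtain e2 where e2: "e2 \<in> edges B2" "e2 \<in> edges F" "e2 \<in> edges G" "e2 \<subseteq> S"
    using edgeB[OF assms(10,12)] by blast
  have B1N: "B1 \<in> s.NB" and B2N: "B2 \<in> s.NB" using assms(9,10) NB by auto
  have g1: "s.Good g (g B1) e1" unfolding s.Good_def
  proof (intro allI impI ballI)
    fix P C assume P: "s.piece P \<and> e1 \<in> edges P" and C: "C \<in> s.NB" "subgraph C P"
    have "subgraph B1 P" using s.C_in_piece[OF B1N e1(1)] P by blast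
    then show "g C = g B1" using s.hyp3_piece[OF h _ _ e1(4) C(1) B1N C(2)] P by blast
  qed
  have g2: "s.Good g (g B1) e2" using s.main[OF h F e1(2) g1 e2(2)] .
  obtain X where X: "is_block G X" "e2 \<in> edges X" using edge_in_block[OF wG e2(3)] by blast
  have pX: "s.piece X" unfolding s.piece_def using X(1) by blast
  have "subgraph B2 X" using s.C_in_piece[OF B2N e2(1) pX X(2)] .
  then have "g B2 = g B1" using g2 pX X(2) B2N unfolding s.Good_def by blast
  then show ?thesis by simp
qed

end
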